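(* Let $\rho_{AB}\in M_2(\mathbb{C})\otimes M_d(\mathbb{C})$ be a bipartite state with $\mathrm{rank}(\rho_{AB})=2$. Let $\{P_{a|0}\}_{a=0}^1$ and $\{P_{a|1}\}_{a=0}^1$ be two nontrivial projective measurements on subsystem $A$ which are different up to relabeling, and set $\rho_{a|x}=\mathrm{Tr}_A\big((P_{a|x}\otimes\mathbb{1})\rho_{AB}\big)$. Then: (i) if one of the four operators $\rho_{a|x}$ is zero, then the other three have rank two and are pairwise proportional; (ii) if $x_1\ne x_2$ and $\rho_{0|x_1},\rho_{1|x_1}$ both have rank one, then either $\rho_{0|x_2}$ and $\rho_{1|x_2}$ both have rank two, or all four $\rho_{a|x}$ have rank one and are pairwise proportional.
   Context: A nontrivial projective measurement on $\mathbb{C}^2$ is a pair $\{P_0,P_1\}$ of rank-one orthogonal projections with $P_0+P_1=\mathbb{1}$. Two such measurements $\{P_{a|0}\}_{a=0}^1,\{P_{a|1}\}_{a=0}^1$ are "different up to relabeling" if $P_{0|0}\ne P_{0|1}$ and $P_{0|0}\ne P_{1|1}$. *)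

theory Defs
  imports "Jordan_Normal_Form.Matrix" "Jordan_Normal_Form.VS_Connect" "Jordan_Normal_Form.DL_Rank"
    "Jordan_Normal_Form.Schur_Decomposition"
begin

(* Conventions: C^2 (x) C^d is identified with C^(2*d) via the basis index
   (a,b) |-> a*d + b, a < 2, b < d (standard Kronecker ordering). *)

definition mrank :: "complex mat \<Rightarrow> nat" where
  "mrank A = vec_space.rank (dim_row A) A"

definition mtrace :: "complex mat \<Rightarrow> complex" where
  "mtrace A = (\<Sum>i<dim_row A. A $$ (i,i))"

definition psd :: "nat \<Rightarrow> complex mat \<Rightarrow> bool" where
  "psd n A \<longleftrightarrow> A \<in> carrier_mat n n \<and> mat_adjoint A = A \<and>
     (\<forall>v \<in> carrier_vec n. cscalar_prod (A *\<^sub>v v) v \<in> \<real> \<and> 0 \<le> Re (cscalar_prod (A *\<^sub>v v) v))"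

definition is_state :: "nat \<Rightarrow> complex mat \<Rightarrow> bool" where
  "is_state n \<rho> \<longleftrightarrow> psd n \<rho> \<and> mtrace \<rho> = 1"

definition rank_one_proj2 :: "complex mat \<Rightarrow> bool" where
  "rank_one_proj2 P \<longleftrightarrow> P \<in> carrier_mat 2 2 \<and> P * P = P \<and> mat_adjoint P = P \<and> mrank P = 1"

definition nontriv_pm :: "complex mat \<Rightarrow> complex mat \<Rightarrow> bool" where
  "nontriv_pm P0 P1 \<longleftrightarrow> rank_one_proj2 P0 \<and> rank_one_proj2 P1 \<and> P0 + P1 = 1\<^sub>m 2"

(* P (x) 1_d for a 2x2 matrix P *)
definition tensor_id :: "nat \<Rightarrow> complex mat \<Rightarrow> complex mat" where
  "tensor_id d P = mat (2*d) (2*d)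
     (\<lambda>(i,j). if i mod d = j mod d then P $$ (i div d, j div d) else 0)"

definition ptrace_A :: "nat \<Rightarrow> complex mat \<Rightarrow> complex mat" where
  "ptrace_A d X = mat d d (\<lambda>(b,b'). \<Sum>a<2. X $$ (a*d + b, a*d + b'))"

definition assem :: "nat \<Rightarrow> complex mat \<Rightarrow> complex mat \<Rightarrow> complex mat" where
  "assem d \<rho> P = ptrace_A d (tensor_id d P * \<rho>)"

definition proportional :: "complex mat \<Rightarrow> complex mat \<Rightarrow> bool" where
  "proportional X Y \<longleftrightarrow> (\<exists>c::complex. c \<noteq> 0 \<and> X = c \<cdot>\<^sub>m Y)"

end

theory Submission
  imports Defs
begin

context vec_space begin

lemma span_cols_mult_subset:
  assumes U: "U \<in> carrier_mat n k" and Y: "Y \<in> carrier_mat k m"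
  shows "span (set (cols (U*Y))) \<subseteq> span (set (cols U))"
proof
  fix y assume "y \<in> span (set (cols (U*Y)))"
  then have "y \<in> col_space (U*Y)" unfolding col_space_def .
  then obtain x where x: "x \<in> carrier_vec m" "y = (U*Y) *\<^sub>v x"
    using col_space_eq[of "U*Y" m] U Y by auto
  have "y = U *\<^sub>v (Y *\<^sub>v x)" using x U Y by (simp add: assoc_mult_mat_vec)
  moreover have "Y *\<^sub>v x \<in> carrier_vec k" using Y x by auto
  ultimately have "y \<in> col_space U" using col_space_eq[of U k] U by auto
  then show "y \<in> span (set (cols U))" unfolding col_space_def .
qed

lemma rank_le_of_span_subset:
  assumes A: "A \<in> carrier_mat n nc" and B: "B \<in> carrier_mat n nc'"
  and sub: "span (set (cols A)) \<subseteq> span (set (cols B))"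
  shows "rank A \<le> rank B"
proof -
  define W where "W = span (set (cols B))"
  have cB: "set (cols B) \<subseteq> carrier_vec n" using B cols_dim carrier_matD(1) by blast
  have cA: "set (cols A) \<subseteq> carrier_vec n" using A cols_dim carrier_matD(1) by blast
  have vsW: "vectorspace class_ring (vs W)" unfolding W_def
    using span_is_subspace[THEN subspace_is_vs, OF cB] by auto
  have smW: "submodule class_ring W V" unfolding W_def by (simp add: span_is_submodule cB)
  have AW: "set (cols A) \<subseteq> W" using sub in_own_span[OF cA] unfolding W_def by auto
  have subs: "VectorSpace.subspace class_ring (span (set (cols A))) (vs W)"
    using vectorspace.span_is_subspace[OF vsW, of "set (cols A)", unfolded
    span_li_not_depend(1)[OF AW smW]] AW by auto
  have fin_dim: "vectorspace.fin_dim class_ring (vs W)"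
       "vectorspace.fin_dim class_ring (vs W\<lparr>carrier := span (set (cols A))\<rparr>)"
    using fin_dim_span_cols A B unfolding W_def by auto
  show ?thesis unfolding rank_def W_def[symmetric]
    using vectorspace.subspace_dim[OF vsW subs fin_dim(1) fin_dim(2)] by simp
qed

lemma rank_mult_le:
  assumes U: "U \<in> carrier_mat n k" and Y: "Y \<in> carrier_mat k m"
  shows "rank (U*Y) \<le> k"
proof -
  have "rank (U*Y) \<le> rank U"
    by (rule rank_le_of_span_subset[OF _ U span_cols_mult_subset[OF U Y]]) (use U Y in auto)
  also have "\<dots> \<le> k" using rank_le_nc[OF U] .
  finally show ?thesis .
qed

lemma rank_factor:
  assumes A: "A \<in> carrier_mat n nc" and r: "rank A \<le> k"
  shows "\<exists>U Y. U \<in> carrier_mat n k \<and> Y \<in> carrier_mat k nc \<and> A = U * Y"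
proof -
  obtain S where S: "maximal S (\<lambda>T. T \<subseteq> set (cols A) \<and> lin_indpt T)"
    using maximal_exists[of "(\<lambda>T. T \<subseteq> set (cols A) \<and> lin_indpt T)" "card (set (cols A))" "{}"]
    by (meson List.finite_set card_mono empty_iff empty_subsetI finite_lin_indpt2 rev_finite_subset)
  have rk: "rank A = card S" using rank_card_indpt[OF A S] .
  have SA: "S \<subseteq> set (cols A)" and li: "lin_indpt S" using S unfolding maximal_def by auto
  have cA: "set (cols A) \<subseteq> carrier_vec n" using A cols_dim carrier_matD(1) by blast
  have Sc: "S \<subseteq> carrier_vec n" using SA cA by auto
  have finS: "finite S" using SA finite_subset by blast
  have inspan: "v \<in> span S" if v: "v \<in> set (cols A)" for v
  proof (cases "v \<in> S")
    case True then show ?thesis using in_own_span[OF Sc] by auto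
  next
    case False
    have "\<not> lin_indpt (insert v S)"
    proof
      assume "lin_indpt (insert v S)"
      then have "insert v S = S" using S v SA unfolding maximal_def by blast
      then show False using False by auto
    qed
    then show ?thesis
      using lin_dep_iff_in_span[of S v] Sc li v cA False by auto
  qed
  obtain ws where ws: "set ws = S" "distinct ws" using finite_distinct_list[OF finS] by auto
  have lws: "length ws = card S" using ws distinct_card by fastforce
  have wsc: "set ws \<subseteq> carrier_vec n" using ws Sc by auto
  define W where "W = mat_of_cols n ws"
  have "\<forall>j. \<exists>x. j < nc \<longrightarrow> col A j = W *\<^sub>v vec (length ws) x"
  proof (intro allI impI)
    fix j
    show "\<exists>x. j < nc \<longrightarrow> col A j = W *\<^sub>v vec (length ws) x"
    proof (cases "j < nc")
      case True
      then have "col A j \<in> set (cols A)" using A by (simp add: cols_def)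
      then have "col A j \<in> span_list ws" using inspan span_list_as_span[OF wsc] ws by auto
      then obtain c where cj: "col A j = lincomb_list c ws" unfolding span_list_def by auto
      have dws: "\<forall>w\<in>set ws. dim_vec w = n" by (meson carrier_vecD subsetD wsc)
      have "col A j = W *\<^sub>v vec (length ws) c" unfolding W_def
        using lincomb_list_as_mat_mult[OF dws, of c] cj by simp
      then show ?thesis by auto
    qed auto
  qed
  then obtain x where x: "\<And>j. j < nc \<Longrightarrow> col A j = W *\<^sub>v vec (length ws) (x j)" by metis
  define U where "U = mat n k (\<lambda>(i,l). if l < length ws then W $$ (i,l) else 0)"
  define Y where "Y = mat k nc (\<lambda>(l,j). if l < length ws then x j l else 0)"
  have lk: "length ws \<le> k" using r rk lws by auto
  have "A = U * Y"
  proof (rule eq_matI)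
    show "dim_row A = dim_row (U*Y)" "dim_col A = dim_col (U*Y)" using A unfolding U_def Y_def by auto
    fix i j assume i: "i < dim_row (U*Y)" and j: "j < dim_col (U*Y)"
    then have i': "i < n" and j': "j < nc" unfolding U_def Y_def by auto
    have "A $$ (i,j) = col A j $ i" using A i' j' by auto
    also have "\<dots> = (W *\<^sub>v vec (length ws) (x j)) $ i" using x[OF j'] by simp
    also have "\<dots> = (\<Sum>l<length ws. W $$ (i,l) * x j l)"
      unfolding W_def using i' by (simp add: mult_mat_vec_def scalar_prod_def row_def atLeast0LessThan mat_of_cols_def)
    also have "\<dots> = (\<Sum>l<k. U $$ (i,l) * Y $$ (l,j))"
    proof -
      have "(\<Sum>l<k. U $$ (i,l) * Y $$ (l,j)) = (\<Sum>l<length ws. U $$ (i,l) * Y $$ (l,j))"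
        by (rule sum.mono_neutral_right) (use lk i' j' in \<open>auto simp: U_def Y_def\<close>)
      also have "\<dots> = (\<Sum>l<length ws. W $$ (i,l) * x j l)"
        by (rule sum.cong) (use lk i' j' in \<open>auto simp: U_def Y_def\<close>)
      finally show ?thesis by simp
    qed
    also have "\<dots> = (U * Y) $$ (i,j)" using i' j' unfolding U_def Y_def
      by (simp add: scalar_prod_def atLeast0LessThan)
    finally show "A $$ (i,j) = (U * Y) $$ (i,j)" .
  qed
  moreover have "U \<in> carrier_mat n k" "Y \<in> carrier_mat k nc" unfolding U_def Y_def by auto
  ultimately show ?thesis by blast
qed

end

lemma mrank_mult_le:
  assumes "U \<in> carrier_mat n k" "Y \<in> carrier_mat k m"
  shows "mrank (U*Y) \<le> k"
  using vec_space.rank_mult_le[OF assms] assms unfolding mrank_def by simp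

lemma mrank_factor:
  assumes "A \<in> carrier_mat n m" "mrank A \<le> k"
  shows "\<exists>U Y. U \<in> carrier_mat n k \<and> Y \<in> carrier_mat k m \<and> A = U * Y"
  using vec_space.rank_factor[OF assms(1)] assms unfolding mrank_def by simp

lemma adj_dim[simp]: "dim_row (mat_adjoint A) = dim_col A" "dim_col (mat_adjoint A) = dim_row A"
  unfolding mat_adjoint_def by (auto simp: mat_of_rows_def)

lemma adj_index[simp]: "i < dim_col A \<Longrightarrow> j < dim_row A \<Longrightarrow> mat_adjoint A $$ (i,j) = cnj (A $$ (j,i))"
  unfolding mat_adjoint_def by (auto simp: mat_of_rows_def)

lemma adj_carrier[simp,intro]: "A \<in> carrier_mat n m \<Longrightarrow> mat_adjoint A \<in> carrier_mat m n"
  by (metis adj_dim carrier_matD carrier_matI)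

lemma adj_adj[simp]: "mat_adjoint (mat_adjoint (A::complex mat)) = A"
  by (rule eq_matI) auto

lemma adj_mult: assumes "A \<in> carrier_mat n k" "B \<in> carrier_mat k m"
  shows "mat_adjoint (A * B) = mat_adjoint B * mat_adjoint (A :: complex mat)"
  by (rule eq_matI) (use assms in \<open>auto simp: scalar_prod_def mult.commute\<close>)

lemma adj_add: assumes "A \<in> carrier_mat n m" "B \<in> carrier_mat n m"
  shows "mat_adjoint (A + B) = mat_adjoint A + mat_adjoint (B :: complex mat)"
  by (rule eq_matI) (use assms in auto)

lemma adj_smult: "mat_adjoint (c \<cdot>\<^sub>m A) = cnj c \<cdot>\<^sub>m mat_adjoint (A :: complex mat)"
  by (rule eq_matI) auto

lemma adj_zero[simp]: "mat_adjoint (0\<^sub>m n m :: complex mat) = 0\<^sub>m m n"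
  by (rule eq_matI) auto

lemma adj_one[simp]: "mat_adjoint (1\<^sub>m n :: complex mat) = 1\<^sub>m n"
  by (rule eq_matI) auto

lemma adj_row: "i < dim_col A \<Longrightarrow> row (mat_adjoint A) i = conjugate (col (A::complex mat) i)"
  by (rule eq_vecI) auto

lemma cscalar_adj:
  assumes A: "A \<in> carrier_mat n m" and x: "x \<in> carrier_vec m" and y: "y \<in> carrier_vec n"
  shows "(A *\<^sub>v x) \<bullet>c y = x \<bullet>c (mat_adjoint A *\<^sub>v (y :: complex vec))"
proof -
  have "(A *\<^sub>v x) \<bullet>c y = (\<Sum>i<n. (\<Sum>j<m. A $$ (i,j) * x $ j) * cnj (y $ i))"
    using A x y by (simp add: scalar_prod_def atLeast0LessThan row_def)
  also have "\<dots> = (\<Sum>i<n. \<Sum>j<m. x $ j * (A $$ (i,j) * cnj (y $ i)))"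
    by (simp add: sum_distrib_right sum_distrib_left mult_ac)
  also have "\<dots> = (\<Sum>j<m. \<Sum>i<n. x $ j * (A $$ (i,j) * cnj (y $ i)))"
    by (rule sum.swap)
  also have "\<dots> = x \<bullet>c (mat_adjoint A *\<^sub>v y)"
    using A x y by (simp add: scalar_prod_def atLeast0LessThan row_def sum_distrib_left)
  finally show ?thesis .
qed

lemma psd_quad_zero:
  assumes psd: "psd n \<rho>" and v: "v \<in> carrier_vec n" and q: "(\<rho> *\<^sub>v v) \<bullet>c v = 0"
  shows "\<rho> *\<^sub>v v = 0\<^sub>v n"
proof -
  have rho: "\<rho> \<in> carrier_mat n n" and herm: "mat_adjoint \<rho> = \<rho>"
    and pos: "\<And>w. w \<in> carrier_vec n \<Longrightarrow> (\<rho> *\<^sub>v w) \<bullet>c w \<in> \<real> \<and> 0 \<le> Re ((\<rho> *\<^sub>v w) \<bullet>c w)"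
    using psd unfolding psd_def by auto
  define u where "u = \<rho> *\<^sub>v v"
  have u: "u \<in> carrier_vec n" unfolding u_def using rho v by auto
  define N where "N = u \<bullet>c u"
  define K where "K = (\<rho> *\<^sub>v u) \<bullet>c u"
  have NR: "N = of_real (Re N)" "Re N \<ge> 0"
    unfolding N_def using conjugate_square_ge_0_vec[of u]
    by (auto simp: less_eq_complex_def complex_eq_iff)
  have KR: "K = of_real (Re K)" "Re K \<ge> 0"
    unfolding K_def using pos[OF u] by (auto simp: complex_eq_iff Reals_def)
  have sw: "(\<rho> *\<^sub>v u) \<bullet>c v = N"
    unfolding N_def using cscalar_adj[OF rho u v] herm u_def by simp
  have expand: "(\<rho> *\<^sub>v (v - c \<cdot>\<^sub>v u)) \<bullet>c (v - c \<cdot>\<^sub>v u) = - 2 * c * N + c * c * K"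
    if c: "cnj c = c" for c
  proof -
    have e1: "\<rho> *\<^sub>v (v - c \<cdot>\<^sub>v u) = u - c \<cdot>\<^sub>v (\<rho> *\<^sub>v u)"
      unfolding u_def using rho v
      by (simp add: mult_minus_distrib_mat_vec mult_mat_vec u_def[symmetric] u)
    have e2: "conjugate (v - c \<cdot>\<^sub>v u) = conjugate v - c \<cdot>\<^sub>v conjugate u"
      using c by (intro eq_vecI) (use v u in auto)
    have ru: "\<rho> *\<^sub>v u \<in> carrier_vec n" using rho u by auto
    have cu: "conjugate u \<in> carrier_vec n" "conjugate v \<in> carrier_vec n" using u v by auto
    have "(u - c \<cdot>\<^sub>v (\<rho> *\<^sub>v u)) \<bullet> (conjugate v - c \<cdot>\<^sub>v conjugate u)
       = u \<bullet> conjugate v - c * (u \<bullet> conjugate u) - c * ((\<rho> *\<^sub>v u) \<bullet> conjugate v)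
         + c * c * ((\<rho> *\<^sub>v u) \<bullet> conjugate u)"
      using u ru cu
      by (simp add: minus_scalar_prod_distrib scalar_prod_minus_distrib
          smult_scalar_prod_distrib scalar_prod_smult_distrib algebra_simps)
    moreover have "u \<bullet> conjugate v = 0" using q u_def by simp
    ultimately show ?thesis using e1 e2 sw unfolding N_def K_def by simp
  qed
  have "Re N = 0"
  proof (rule ccontr)
    assume "Re N \<noteq> 0"
    then have Np: "Re N > 0" using NR by auto
    define t where "t = Re N / (Re K + 1)"
    have tp: "t > 0" unfolding t_def using Np KR by auto
    have "(\<rho> *\<^sub>v (v - of_real t \<cdot>\<^sub>v u)) \<bullet>c (v - of_real t \<cdot>\<^sub>v u) = - 2 * of_real t * N + of_real t * of_real t * K"
      by (rule expand) simp
    moreover have "v - of_real t \<cdot>\<^sub>v u \<in> carrier_vec n" using v u by auto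
    ultimately have "0 \<le> Re (- 2 * of_real t * N + of_real t * of_real t * K)" using pos by metis
    moreover have "Re (- 2 * of_real t * N + of_real t * of_real t * K) = - 2 * t * Re N + t * t * Re K"
      by simp
    ultimately have "0 \<le> t * (t * Re K - 2 * Re N)" by (simp add: algebra_simps)
    then have "0 \<le> t * Re K - 2 * Re N" using tp by (simp add: zero_le_mult_iff)
    then have "2 * Re N \<le> t * Re K" by simp
    moreover have "t * Re K < Re N" unfolding t_def using Np KR
      by (simp add: field_simps)
    ultimately show False using Np by auto
  qed
  then have "u \<bullet>c u = 0" using NR unfolding N_def by simp
  then show ?thesis using u unfolding u_def by simp
qed

lemma psd_mat_zero:
  assumes psd: "psd n \<rho>" and G: "G \<in> carrier_mat n m"
  and z: "\<And>j. j < m \<Longrightarrow> (mat_adjoint G * (\<rho> * G)) $$ (j,j) = 0"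
  shows "\<rho> * G = 0\<^sub>m n m"
proof (rule eq_matI)
  have rho: "\<rho> \<in> carrier_mat n n" using psd unfolding psd_def by auto
  show "dim_row (\<rho> * G) = dim_row (0\<^sub>m n m)" "dim_col (\<rho> * G) = dim_col (0\<^sub>m n m)"
    using rho G by auto
  fix i j assume i: "i < dim_row (0\<^sub>m n m)" and j: "j < dim_col (0\<^sub>m n m)"
  then have i': "i < n" and j': "j < m" by auto
  have cj: "col G j \<in> carrier_vec n" using G j' by auto
  have e1: "(mat_adjoint G * (\<rho> * G)) $$ (j,j) = row (mat_adjoint G) j \<bullet> col (\<rho> * G) j"
    using G rho j' by (intro index_mult_mat(1)) auto
  have e2: "row (mat_adjoint G) j = conjugate (col G j)" using G j' by (intro adj_row) auto
  have e3: "col (\<rho> * G) j = \<rho> *\<^sub>v col G j" using G rho j' by (intro col_mult2) auto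
  have rc: "\<rho> *\<^sub>v col G j \<in> carrier_vec n" using rho cj by auto
  have "(\<rho> *\<^sub>v col G j) \<bullet>c col G j = conjugate (col G j) \<bullet> (\<rho> *\<^sub>v col G j)"
    using comm_scalar_prod[OF rc, of "conjugate (col G j)"] cj by simp
  also have "\<dots> = 0" using z[OF j'] e1 e2 e3 by simp
  finally have "(\<rho> *\<^sub>v col G j) \<bullet>c col G j = 0" .
  from psd_quad_zero[OF psd cj this] have "\<rho> *\<^sub>v col G j = 0\<^sub>v n" .
  then have "(\<rho> *\<^sub>v col G j) $ i = 0" using i' by simp
  moreover have "(\<rho> * G) $$ (i,j) = (\<rho> *\<^sub>v col G j) $ i"
    using rho G i' j' by simp
  ultimately show "(\<rho> * G) $$ (i,j) = 0\<^sub>m n m $$ (i,j)" using i' j' by simp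
qed

lemma sum_split2: fixes d :: nat and f :: "nat \<Rightarrow> 'a::comm_monoid_add"
  shows "(\<Sum>k<2*d. f k) = (\<Sum>k<d. f k) + (\<Sum>k<d. f (k + d))"
proof -
  have "{..<2*d} = {..<d} \<union> {0+d..<d+d}" by auto
  moreover have "sum f ({..<d} \<union> {0+d..<d+d}) = sum f {..<d} + sum f {0+d..<d+d}"
    by (rule sum.union_disjoint) auto
  ultimately have "(\<Sum>k<2*d. f k) = (\<Sum>k<d. f k) + sum f {0+d..<d+d}"
    by simp
  also have "sum f {0+d..<d+d} = (\<Sum>k<d. f (k + d))"
    by (subst sum.shift_bounds_nat_ivl) (simp add: atLeast0LessThan)
  finally show ?thesis .
qed

definition Emat :: "nat \<Rightarrow> complex \<Rightarrow> complex \<Rightarrow> complex mat" where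
  "Emat d x y = mat (2*d) d (\<lambda>(i,j). if i = j then x else if i = j + d then y else 0)"

definition prj :: "complex \<Rightarrow> complex \<Rightarrow> complex mat" where
  "prj x y = mat 2 2 (\<lambda>(i,j). (if i = 0 then x else y) * cnj (if j = 0 then x else y))"

lemma Emat_carrier[simp]: "Emat d x y \<in> carrier_mat (2*d) d"
  unfolding Emat_def by simp
lemma Emat_dim[simp]: "dim_row (Emat d x y) = 2*d" "dim_col (Emat d x y) = d"
  unfolding Emat_def by simp_all

lemma Emat_index: "i < 2*d \<Longrightarrow> k < d \<Longrightarrow> Emat d x y $$ (i,k) = (if i = k then x else if i = k + d then y else 0)"
  unfolding Emat_def by simp

lemma Emat_lin: "Emat d (a*x + b*x') (a*y + b*y') = a \<cdot>\<^sub>m Emat d x y + b \<cdot>\<^sub>m Emat d x' y'"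
  by (rule eq_matI) (auto simp: Emat_index)

lemma Emat_neg: "Emat d (-x) (-y) = (-1) \<cdot>\<^sub>m Emat d x y"
  by (rule eq_matI) (auto simp: Emat_index)

lemma mult_Emat:
  assumes M: "M \<in> carrier_mat n (2*d)" and i: "i < n" and k: "k < d"
  shows "(M * Emat d x y) $$ (i,k) = M $$ (i,k) * x + M $$ (i,k+d) * y"
proof -
  have "(M * Emat d x y) $$ (i,k) = (\<Sum>l<2*d. M $$ (i,l) * Emat d x y $$ (l,k))"
    using M i k by (simp add: scalar_prod_def atLeast0LessThan)
  also have "\<dots> = (\<Sum>l<d. M $$ (i,l) * Emat d x y $$ (l,k)) + (\<Sum>l<d. M $$ (i,l+d) * Emat d x y $$ (l+d,k))"
    by (rule sum_split2)
  also have "(\<Sum>l<d. M $$ (i,l) * Emat d x y $$ (l,k)) = (\<Sum>l<d. if l = k then M $$ (i,l) * x else 0)"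
    by (rule sum.cong) (use k in \<open>auto simp: Emat_index\<close>)
  also have "\<dots> = M $$ (i,k) * x" using k by simp
  also have "(\<Sum>l<d. M $$ (i,l+d) * Emat d x y $$ (l+d,k)) = (\<Sum>l<d. if l = k then M $$ (i,l+d) * y else 0)"
    by (rule sum.cong) (use k in \<open>auto simp: Emat_index\<close>)
  also have "\<dots> = M $$ (i,k+d) * y" using k by simp
  finally show ?thesis .
qed

lemma adj_Emat_mult:
  assumes M: "M \<in> carrier_mat (2*d) m" and k: "k < d" and j: "j < m"
  shows "(mat_adjoint (Emat d x y) * M) $$ (k,j) = cnj x * M $$ (k,j) + cnj y * M $$ (k+d,j)"
proof -
  have "(mat_adjoint (Emat d x y) * M) $$ (k,j) = (\<Sum>l<2*d. cnj (Emat d x y $$ (l,k)) * M $$ (l,j))"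
    using M j k by (simp add: scalar_prod_def atLeast0LessThan)
  also have "\<dots> = (\<Sum>l<d. cnj (Emat d x y $$ (l,k)) * M $$ (l,j)) + (\<Sum>l<d. cnj (Emat d x y $$ (l+d,k)) * M $$ (l+d,j))"
    by (rule sum_split2)
  also have "(\<Sum>l<d. cnj (Emat d x y $$ (l,k)) * M $$ (l,j)) = (\<Sum>l<d. if l = k then cnj x * M $$ (l,j) else 0)"
    by (rule sum.cong) (use k in \<open>auto simp: Emat_index\<close>)
  also have "\<dots> = cnj x * M $$ (k,j)" using k by simp
  also have "(\<Sum>l<d. cnj (Emat d x y $$ (l+d,k)) * M $$ (l+d,j)) = (\<Sum>l<d. if l = k then cnj y * M $$ (l+d,j) else 0)"
    by (rule sum.cong) (use k in \<open>auto simp: Emat_index\<close>)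
  also have "\<dots> = cnj y * M $$ (k+d,j)" using k by simp
  finally show ?thesis .
qed

lemma Emat_orth:
  "mat_adjoint (Emat d x y) * Emat d x' y' = (cnj x * x' + cnj y * y') \<cdot>\<^sub>m 1\<^sub>m d"
proof (rule eq_matI)
  fix i j assume i: "i < dim_row ((cnj x * x' + cnj y * y') \<cdot>\<^sub>m 1\<^sub>m d)"
    and j: "j < dim_col ((cnj x * x' + cnj y * y') \<cdot>\<^sub>m 1\<^sub>m d)"
  then have i': "i < d" and j': "j < d" by auto
  show "(mat_adjoint (Emat d x y) * Emat d x' y') $$ (i,j) = ((cnj x * x' + cnj y * y') \<cdot>\<^sub>m 1\<^sub>m d) $$ (i,j)"
    using adj_Emat_mult[OF Emat_carrier i' j', of x y x' y'] i' j' by (simp add: Emat_index)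
qed auto

lemma Emat_adj_index:
  assumes i: "i < 2*d" and j: "j < 2*d"
  shows "(Emat d x y * mat_adjoint (Emat d x y)) $$ (i,j) =
    (if i < d then x * cnj (Emat d x y $$ (j,i)) else y * cnj (Emat d x y $$ (j,i-d)))"
proof -
  have "(Emat d x y * mat_adjoint (Emat d x y)) $$ (i,j) = (\<Sum>k<d. Emat d x y $$ (i,k) * cnj (Emat d x y $$ (j,k)))"
    using i j by (simp add: scalar_prod_def atLeast0LessThan)
  also have "\<dots> = (if i < d then x * cnj (Emat d x y $$ (j,i)) else y * cnj (Emat d x y $$ (j,i-d)))"
  proof (cases "i < d")
    case True
    have "(\<Sum>k<d. Emat d x y $$ (i,k) * cnj (Emat d x y $$ (j,k))) = (\<Sum>k<d. if k = i then x * cnj (Emat d x y $$ (j,k)) else 0)"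
      by (rule sum.cong) (use i True in \<open>auto simp: Emat_index\<close>)
    then show ?thesis using True by simp
  next
    case False
    have "(\<Sum>k<d. Emat d x y $$ (i,k) * cnj (Emat d x y $$ (j,k))) = (\<Sum>k<d. if k = i - d then y * cnj (Emat d x y $$ (j,k)) else 0)"
      by (rule sum.cong) (use i False in \<open>auto simp: Emat_index\<close>)
    then show ?thesis using False i by simp
  qed
  finally show ?thesis .
qed

lemma Emat_complete:
  assumes u: "cnj x * x + cnj y * y = 1"
  shows "Emat d x y * mat_adjoint (Emat d x y) + Emat d (- cnj y) (cnj x) * mat_adjoint (Emat d (- cnj y) (cnj x)) = 1\<^sub>m (2*d)"
proof (rule eq_matI)
  fix i j assume i: "i < dim_row (1\<^sub>m (2*d) :: complex mat)" and j: "j < dim_col (1\<^sub>m (2*d) :: complex mat)"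
  then have i': "i < 2*d" and j': "j < 2*d" by auto
  have u': "x * cnj x + y * cnj y = 1" using u by (simp add: mult.commute)
  have i1: "i < dim_row (Emat d (- cnj y) (cnj x) * mat_adjoint (Emat d (- cnj y) (cnj x)))"
    and j1: "j < dim_col (Emat d (- cnj y) (cnj x) * mat_adjoint (Emat d (- cnj y) (cnj x)))"
    using i' j' by auto
  show "(Emat d x y * mat_adjoint (Emat d x y) + Emat d (- cnj y) (cnj x) * mat_adjoint (Emat d (- cnj y) (cnj x))) $$ (i,j) = 1\<^sub>m (2*d) $$ (i,j)"
    unfolding index_add_mat(1)[OF i1 j1] Emat_adj_index[OF i' j']
    using i' j' u' by (auto simp: Emat_index algebra_simps)
qed auto

lemma tensor_id_mult_index:
  assumes P: "P \<in> carrier_mat 2 2" and M: "M \<in> carrier_mat (2*d) m"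
    and a: "a < 2" and b: "b < d" and c: "c < m"
  shows "(tensor_id d P * M) $$ (a*d+b, c) = P $$ (a,0) * M $$ (b,c) + P $$ (a,1) * M $$ (b+d,c)"
proof -
  have "a = 0 \<or> a = 1" using a by auto
  then have ab: "a*d + b < 2*d" using b by auto
  have md: "(a*d+b) mod d = b" "(a*d+b) div d = a" using b by auto
  have "(tensor_id d P * M) $$ (a*d+b, c) = (\<Sum>l<2*d. tensor_id d P $$ (a*d+b,l) * M $$ (l,c))"
    using M ab c by (simp add: scalar_prod_def atLeast0LessThan tensor_id_def)
  also have "\<dots> = (\<Sum>l<d. tensor_id d P $$ (a*d+b,l) * M $$ (l,c)) + (\<Sum>l<d. tensor_id d P $$ (a*d+b,l+d) * M $$ (l+d,c))"
    by (rule sum_split2)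
  also have "(\<Sum>l<d. tensor_id d P $$ (a*d+b,l) * M $$ (l,c)) = (\<Sum>l<d. if l = b then P $$ (a,0) * M $$ (l,c) else 0)"
    by (rule sum.cong) (use ab md b in \<open>auto simp: tensor_id_def\<close>)
  also have "\<dots> = P $$ (a,0) * M $$ (b,c)" using b by simp
  also have "(\<Sum>l<d. tensor_id d P $$ (a*d+b,l+d) * M $$ (l+d,c)) = (\<Sum>l<d. if l = b then P $$ (a,1) * M $$ (l+d,c) else 0)"
  proof (rule sum.cong)
    fix l assume l: "l \<in> {..<d}"
    have "(l + d) mod d = l" "(l+d) div d = 1" using l by auto
    then show "tensor_id d P $$ (a*d+b,l+d) * M $$ (l+d,c) = (if l = b then P $$ (a,1) * M $$ (l+d,c) else 0)"
      using ab md l by (auto simp: tensor_id_def)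
  qed simp
  also have "\<dots> = P $$ (a,1) * M $$ (b+d,c)" using b by simp
  finally show ?thesis .
qed

lemma assem_prj:
  assumes rho: "\<rho> \<in> carrier_mat (2*d) (2*d)"
  shows "assem d \<rho> (prj x y) = mat_adjoint (Emat d x y) * \<rho> * Emat d x y"
proof (rule eq_matI)
  have P: "prj x y \<in> carrier_mat 2 2" unfolding prj_def by simp
  fix b b' assume b: "b < dim_row (mat_adjoint (Emat d x y) * \<rho> * Emat d x y)"
    and b': "b' < dim_col (mat_adjoint (Emat d x y) * \<rho> * Emat d x y)"
  then have b1: "b < d" and b2: "b' < d" by auto
  have T: "tensor_id d (prj x y) \<in> carrier_mat (2*d) (2*d)" unfolding tensor_id_def by simp
  have l: "assem d \<rho> (prj x y) $$ (b,b') = (tensor_id d (prj x y) * \<rho>) $$ (0*d+b, b') + (tensor_id d (prj x y) * \<rho>) $$ (1*d+b, b'+d)"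
    unfolding assem_def ptrace_A_def using b1 b2 by (simp add: numeral_2_eq_2 add.commute)
  have bd: "b' + d < 2*d" and bw: "b' < 2*d" using b2 by simp_all
  have r1: "(mat_adjoint (Emat d x y) * \<rho> * Emat d x y) $$ (b,b') =
     (mat_adjoint (Emat d x y) * \<rho>) $$ (b,b') * x + (mat_adjoint (Emat d x y) * \<rho>) $$ (b,b'+d) * y"
    by (rule mult_Emat) (use rho b1 b2 in auto)
  show "assem d \<rho> (prj x y) $$ (b,b') = (mat_adjoint (Emat d x y) * \<rho> * Emat d x y) $$ (b,b')"
    unfolding l r1
    using tensor_id_mult_index[OF P rho _ b1 bw, of 0] tensor_id_mult_index[OF P rho _ b1 bd, of 1]
      adj_Emat_mult[OF rho b1 bw, of x y] adj_Emat_mult[OF rho b1 bd, of x y]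
    by (simp add: prj_def algebra_simps)
qed (auto simp: assem_def ptrace_A_def)

lemma psd_carrier: "psd n R \<Longrightarrow> R \<in> carrier_mat n n" unfolding psd_def by auto
lemma psd_herm: "psd n R \<Longrightarrow> mat_adjoint R = R" unfolding psd_def by auto

lemma psd_congr:
  assumes psd: "psd n \<rho>" and G: "G \<in> carrier_mat n m"
  shows "psd m (mat_adjoint G * \<rho> * G)"
proof -
  have rho: "\<rho> \<in> carrier_mat n n" and herm: "mat_adjoint \<rho> = \<rho>"
    and pos: "\<And>w. w \<in> carrier_vec n \<Longrightarrow> (\<rho> *\<^sub>v w) \<bullet>c w \<in> \<real> \<and> 0 \<le> Re ((\<rho> *\<^sub>v w) \<bullet>c w)"
    using psd unfolding psd_def by auto
  have aG: "mat_adjoint G \<in> carrier_mat m n" using G by simp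
  have c: "mat_adjoint G * \<rho> * G \<in> carrier_mat m m"
    using mult_carrier_mat[OF mult_carrier_mat[OF aG rho] G] .
  have "mat_adjoint (mat_adjoint G * \<rho> * G) = mat_adjoint G * mat_adjoint (mat_adjoint G * \<rho>)"
    by (rule adj_mult[OF mult_carrier_mat[OF aG rho] G])
  also have "mat_adjoint (mat_adjoint G * \<rho>) = mat_adjoint \<rho> * G"
    using adj_mult[OF aG rho] by simp
  also have "mat_adjoint G * (mat_adjoint \<rho> * G) = mat_adjoint G * \<rho> * G"
    using herm assoc_mult_mat[OF aG rho G] by simp
  finally have h: "mat_adjoint (mat_adjoint G * \<rho> * G) = mat_adjoint G * \<rho> * G" .
  have q: "((mat_adjoint G * \<rho> * G) *\<^sub>v v) \<bullet>c v = (\<rho> *\<^sub>v (G *\<^sub>v v)) \<bullet>c (G *\<^sub>v v)"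
    if v: "v \<in> carrier_vec m" for v
  proof -
    have Gv: "G *\<^sub>v v \<in> carrier_vec n" using G v by simp
    have rGv: "\<rho> *\<^sub>v (G *\<^sub>v v) \<in> carrier_vec n" using rho Gv by simp
    have "(mat_adjoint G * \<rho> * G) *\<^sub>v v = mat_adjoint G *\<^sub>v (\<rho> *\<^sub>v (G *\<^sub>v v))"
      using assoc_mult_mat_vec[OF mult_carrier_mat[OF aG rho] G v] assoc_mult_mat_vec[OF aG rho Gv] by simp
    then show ?thesis using cscalar_adj[OF aG rGv v] by simp
  qed
  show ?thesis unfolding psd_def using c h q pos G by auto
qed

lemma psd_diag:
  assumes psd: "psd n R" and p: "p < n"
  shows "R $$ (p,p) \<in> \<real>" "0 \<le> Re (R $$ (p,p))"
proof -
  have R: "R \<in> carrier_mat n n" using psd_carrier[OF psd] .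
  have u: "unit_vec n p \<in> carrier_vec n" by simp
  have cu: "conjugate (unit_vec n p) = (unit_vec n p :: complex vec)"
    by (rule eq_vecI) (auto simp: unit_vec_def)
  have "(R *\<^sub>v unit_vec n p) \<bullet>c unit_vec n p = (R *\<^sub>v unit_vec n p) $ p"
    unfolding cu using R p by (simp add: scalar_prod_right_unit)
  also have "\<dots> = R $$ (p,p)" using R p by (simp add: scalar_prod_right_unit)
  finally have e: "(R *\<^sub>v unit_vec n p) \<bullet>c unit_vec n p = R $$ (p,p)" .
  show "R $$ (p,p) \<in> \<real>" "0 \<le> Re (R $$ (p,p))"
    using psd u e unfolding psd_def by metis+
qed

lemma herm_entry:
  assumes "mat_adjoint R = R" "R \<in> carrier_mat n n" "i < n" "j < n"
  shows "R $$ (i,j) = cnj (R $$ (j,i))"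
  using adj_index[of i R j] assms by (metis carrier_matD(1) carrier_matD(2))

lemma mrank_le_zero:
  assumes "R \<in> carrier_mat n m"
  shows "mrank R = 0 \<longleftrightarrow> R = 0\<^sub>m n m"
proof
  assume "mrank R = 0"
  then obtain U Y where UY: "U \<in> carrier_mat n 0" "Y \<in> carrier_mat 0 m" "R = U * Y"
    using mrank_factor[OF assms, of 0] by auto
  show "R = 0\<^sub>m n m"
    by (rule eq_matI) (use UY in \<open>auto simp: scalar_prod_def\<close>)
next
  assume "R = 0\<^sub>m n m"
  then show "mrank R = 0" unfolding mrank_def by (simp add: vec_space.rank_0I)
qed

lemma mrank_smult_le:
  assumes R: "R \<in> carrier_mat n m"
  shows "mrank (c \<cdot>\<^sub>m R) \<le> mrank R"
proof -
  obtain U Y where UY: "U \<in> carrier_mat n (mrank R)" "Y \<in> carrier_mat (mrank R) m" "R = U * Y"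
    using mrank_factor[OF R, of "mrank R"] by auto
  have "c \<cdot>\<^sub>m R = (c \<cdot>\<^sub>m U) * Y" using mult_smult_assoc_mat[OF UY(1) UY(2)] UY(3) by simp
  then show ?thesis using mrank_mult_le[of "c \<cdot>\<^sub>m U" n "mrank R" Y m] UY by simp
qed

lemma mrank_smult:
  assumes R: "R \<in> carrier_mat n m" and c: "c \<noteq> 0"
  shows "mrank (c \<cdot>\<^sub>m R) = mrank R"
proof -
  have "R = inverse c \<cdot>\<^sub>m (c \<cdot>\<^sub>m R)" by (rule eq_matI) (use c in auto)
  then have "mrank R \<le> mrank (c \<cdot>\<^sub>m R)" using mrank_smult_le[of "c \<cdot>\<^sub>m R" n m "inverse c"] R by simp
  then show ?thesis using mrank_smult_le[OF R, of c] by linarith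
qed

lemma mrank_le1_minor:
  assumes R: "R \<in> carrier_mat n m" and r: "mrank R \<le> 1"
    and i: "i < n" "k < n" and j: "j < m" "l < m"
  shows "R $$ (i,j) * R $$ (k,l) = R $$ (i,l) * R $$ (k,j)"
proof -
  obtain U Y where UY: "U \<in> carrier_mat n 1" "Y \<in> carrier_mat 1 m" "R = U * Y"
    using mrank_factor[OF R r] by auto
  have e: "\<And>a b. a < n \<Longrightarrow> b < m \<Longrightarrow> R $$ (a,b) = U $$ (a,0) * Y $$ (0,b)"
    using UY by (simp add: scalar_prod_def)
  show ?thesis using e i j by simp
qed

lemma mrank_add_le:
  assumes "X \<in> carrier_mat n m" "Y \<in> carrier_mat n m"
  shows "mrank (X + Y) \<le> mrank X + mrank Y"
  using vec_space.rank_subadditive[OF assms] assms unfolding mrank_def by simp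

lemma rank1_psd:
  assumes psd: "psd n R" and r: "mrank R = 1"
  shows "\<exists>A. A \<in> carrier_mat n 1 \<and> R = A * mat_adjoint A"
proof -
  have R: "R \<in> carrier_mat n n" using psd_carrier[OF psd] .
  have herm: "mat_adjoint R = R" using psd_herm[OF psd] .
  obtain U Y where UY: "U \<in> carrier_mat n 1" "Y \<in> carrier_mat 1 n" "R = U * Y"
    using mrank_factor[OF R, of 1] r by auto
  have e: "\<And>a b. a < n \<Longrightarrow> b < n \<Longrightarrow> R $$ (a,b) = U $$ (a,0) * Y $$ (0,b)"
    using UY by (simp add: scalar_prod_def)
  have "R \<noteq> 0\<^sub>m n n" using mrank_le_zero[OF R] r by auto
  then obtain p q where pq: "p < n" "q < n" "R $$ (p,q) \<noteq> 0"
    using R by (metis carrier_matD(1) carrier_matD(2) eq_matI index_zero_mat(1,2,3))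
  have Up: "U $$ (p,0) \<noteq> 0" and Yq: "Y $$ (0,q) \<noteq> 0" using pq e by auto
  define \<kappa> where "\<kappa> = cnj (Y $$ (0,p)) / U $$ (p,0)"
  have Yj: "Y $$ (0,j) = \<kappa> * cnj (U $$ (j,0))" if j: "j < n" for j
  proof -
    have "R $$ (p,j) = cnj (R $$ (j,p))" using herm_entry[OF herm R pq(1) j] .
    then have "U $$ (p,0) * Y $$ (0,j) = cnj (U $$ (j,0)) * cnj (Y $$ (0,p))"
      using e pq j by simp
    then show ?thesis unfolding \<kappa>_def using Up by (simp add: field_simps)
  qed
  have Rij: "R $$ (i,j) = \<kappa> * (U $$ (i,0) * cnj (U $$ (j,0)))" if "i < n" "j < n" for i j
    using e Yj that by simp
  have kn0: "\<kappa> \<noteq> 0" using Yj[OF pq(2)] Yq by auto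
  define c2 where "c2 = (cmod (U $$ (p,0)))\<^sup>2"
  have Rpp: "R $$ (p,p) = \<kappa> * (U $$ (p,0) * cnj (U $$ (p,0)))"
    using Rij[OF pq(1) pq(1)] by simp
  have nz: "U $$ (p,0) * cnj (U $$ (p,0)) = of_real c2" unfolding c2_def by (simp only: complex_norm_square)
  have cpos: "c2 > 0" unfolding c2_def using Up by simp
  have "R $$ (p,p) \<in> \<real>" "0 \<le> Re (R $$ (p,p))" using psd_diag[OF psd pq(1)] by auto
  then obtain r where r: "R $$ (p,p) = of_real r" "r \<ge> 0" by (metis Re_complex_of_real Reals_cases)
  define k where "k = r / c2"
  have "\<kappa> = R $$ (p,p) / of_real c2" using Rpp nz cpos by simp
  then have kk: "\<kappa> = of_real k" unfolding k_def using r by simp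
  have k0: "k \<ge> 0" unfolding k_def using r cpos by simp
  define A where "A = of_real (sqrt k) \<cdot>\<^sub>m U"
  have "R = A * mat_adjoint A"
  proof (rule eq_matI)
    show "dim_row R = dim_row (A * mat_adjoint A)" "dim_col R = dim_col (A * mat_adjoint A)"
      using R UY unfolding A_def by auto
    fix i j assume "i < dim_row (A * mat_adjoint A)" "j < dim_col (A * mat_adjoint A)"
    then have ij: "i < n" "j < n" using UY unfolding A_def by auto
    have "(A * mat_adjoint A) $$ (i,j) = of_real (sqrt k) * U $$ (i,0) * cnj (of_real (sqrt k) * U $$ (j,0))"
      using UY ij unfolding A_def by (simp add: scalar_prod_def)
    also have "\<dots> = (of_real (sqrt k) * of_real (sqrt k)) * (U $$ (i,0) * cnj (U $$ (j,0)))" by (simp add: mult_ac)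
    also have "of_real (sqrt k) * of_real (sqrt k) = (of_real k :: complex)"
      using k0 by (metis of_real_mult real_sqrt_mult_self abs_of_nonneg)
    also have "of_real k * (U $$ (i,0) * cnj (U $$ (j,0))) = R $$ (i,j)" using Rij[OF ij] kk by simp
    finally show "R $$ (i,j) = (A * mat_adjoint A) $$ (i,j)" by simp
  qed
  moreover have "A \<in> carrier_mat n 1" using UY unfolding A_def by simp
  ultimately show ?thesis by blast
qed

lemma assoc_dim: "dim_col A = dim_row B \<Longrightarrow> dim_col B = dim_row C \<Longrightarrow> A * B * C = A * (B * (C::'a::comm_ring mat))"
  by (rule assoc_mult_mat[of A "dim_row A" "dim_col A" B "dim_col B" C "dim_col C"]) (auto intro!: carrier_matI)

lemma add_mult_dim: "dim_row A = dim_row B \<Longrightarrow> dim_col A = dim_col B \<Longrightarrow> dim_col A = dim_row C \<Longrightarrow> (A + B) * C = A * C + B * (C::'a::comm_ring mat)"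
  by (rule add_mult_distrib_mat[of A "dim_row A" "dim_col A"]) (auto intro!: carrier_matI)

lemma mult_add_dim: "dim_row B = dim_row C \<Longrightarrow> dim_col B = dim_col C \<Longrightarrow> dim_col A = dim_row B \<Longrightarrow> A * (B + C) = A * B + A * (C::'a::comm_ring mat)"
  by (rule mult_add_distrib_mat[of A "dim_row A" "dim_col A"]) (auto intro!: carrier_matI)

lemma minus_mult_dim: "dim_row A = dim_row B \<Longrightarrow> dim_col A = dim_col B \<Longrightarrow> dim_col A = dim_row C \<Longrightarrow> (A - B) * C = A * C - B * (C::'a::comm_ring mat)"
  by (rule minus_mult_distrib_mat[of A "dim_row A" "dim_col A"]) (auto intro!: carrier_matI)

lemma mult_minus_dim: "dim_row B = dim_row C \<Longrightarrow> dim_col B = dim_col C \<Longrightarrow> dim_col A = dim_row B \<Longrightarrow> A * (B - C) = A * B - A * (C::'a::comm_ring mat)"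
  by (rule mult_minus_distrib_mat[of A "dim_row A" "dim_col A"]) (auto intro!: carrier_matI)

lemma mult_smult_dim: "dim_col A = dim_row B \<Longrightarrow> A * (c \<cdot>\<^sub>m B) = c \<cdot>\<^sub>m (A * (B::'a::comm_ring mat))"
  by (rule mult_smult_distrib[of A "dim_row A" "dim_col A"]) (auto intro!: carrier_matI)

lemma smult_mult_dim: "dim_col A = dim_row B \<Longrightarrow> (c \<cdot>\<^sub>m A) * B = c \<cdot>\<^sub>m (A * (B::'a::comm_ring mat))"
  by (rule mult_smult_assoc_mat[of A "dim_row A" "dim_col A"]) (auto intro!: carrier_matI)

lemma adj_mult_dim: "dim_col A = dim_row B \<Longrightarrow> mat_adjoint (A * B) = mat_adjoint B * mat_adjoint (A::complex mat)"
  by (rule adj_mult[of A "dim_row A" "dim_col A" B "dim_col B"]) (auto intro!: carrier_matI)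

lemma one_mult_dim: "dim_row A = n \<Longrightarrow> 1\<^sub>m n * A = (A::'a::comm_ring_1 mat)"
  by (rule left_mult_one_mat) (auto intro!: carrier_matI)
lemma mult_one_dim: "dim_col A = n \<Longrightarrow> A * 1\<^sub>m n = (A::'a::comm_ring_1 mat)"
  by (rule right_mult_one_mat) (auto intro!: carrier_matI)

lemma zero_mult_dim: "dim_row B = m \<Longrightarrow> 0\<^sub>m n m * B = (0\<^sub>m n (dim_col B) :: 'a::comm_ring mat)"
  by (rule left_mult_zero_mat) (auto intro!: carrier_matI)
lemma mult_zero_dim: "dim_col A = m \<Longrightarrow> A * 0\<^sub>m m n = (0\<^sub>m (dim_row A) n :: 'a::comm_ring mat)"
  by (rule right_mult_zero_mat) (auto intro!: carrier_matI)

lemmas mat_dim_simps = assoc_dim add_mult_dim mult_add_dim minus_mult_dim mult_minus_dim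
  mult_smult_dim smult_mult_dim one_mult_dim mult_one_dim zero_mult_dim mult_zero_dim

definition co :: "nat \<Rightarrow> complex \<Rightarrow> complex \<Rightarrow> nat \<Rightarrow> complex" where
  "co d x y i = (if i < d then x else y)"

definition Sm :: "nat \<Rightarrow> complex mat \<Rightarrow> complex \<Rightarrow> complex \<Rightarrow> complex \<Rightarrow> complex \<Rightarrow> complex mat" where
  "Sm d \<rho> x y x' y' = mat_adjoint (Emat d x y) * \<rho> * Emat d x' y'"

lemma Sm_dim[simp]: "dim_row (Sm d \<rho> x y x' y') = d" "dim_col (Sm d \<rho> x y x' y') = d"
  unfolding Sm_def by simp_all

lemma Sm_carrier[simp]: "Sm d \<rho> x y x' y' \<in> carrier_mat d d"
  by (rule carrier_matI) simp_all

lemma Sm_entry: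
  assumes rho: "\<rho> \<in> carrier_mat (2*d) (2*d)" and k: "k < d" and l: "l < d"
  shows "Sm d \<rho> x y x' y' $$ (k,l) = cnj x * x' * \<rho> $$ (k,l) + cnj x * y' * \<rho> $$ (k,l+d)
     + cnj y * x' * \<rho> $$ (k+d,l) + cnj y * y' * \<rho> $$ (k+d,l+d)"
proof -
  have M: "mat_adjoint (Emat d x y) * \<rho> \<in> carrier_mat d (2*d)"
    using mult_carrier_mat[OF adj_carrier[OF Emat_carrier] rho] .
  have l1: "l < 2*d" and l2: "l + d < 2*d" using l by auto
  show ?thesis unfolding Sm_def mult_Emat[OF M k l]
    using adj_Emat_mult[OF rho k l1, of x y] adj_Emat_mult[OF rho k l2, of x y]
    by (simp add: algebra_simps)
qed

lemma Sm_swap: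
  assumes rho: "\<rho> \<in> carrier_mat (2*d) (2*d)" and h: "mat_adjoint \<rho> = \<rho>" and k: "k < d" and l: "l < d"
  shows "Sm d \<rho> x y x' y' $$ (k,l) = cnj (Sm d \<rho> x' y' x y $$ (l,k))"
proof -
  have hh: "\<And>i j. i < 2*d \<Longrightarrow> j < 2*d \<Longrightarrow> \<rho> $$ (i,j) = cnj (\<rho> $$ (j,i))"
    by (fact herm_entry[OF h rho])
  have "\<rho> $$ (k,l) = cnj (\<rho> $$ (l,k))" by (rule hh) (use k l in auto)
  moreover have "\<rho> $$ (k,l+d) = cnj (\<rho> $$ (l+d,k))" by (rule hh) (use k l in auto)
  moreover have "\<rho> $$ (k+d,l) = cnj (\<rho> $$ (l,k+d))" by (rule hh) (use k l in auto)
  moreover have "\<rho> $$ (k+d,l+d) = cnj (\<rho> $$ (l+d,k+d))" by (rule hh) (use k l in auto)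
  ultimately show ?thesis unfolding Sm_entry[OF rho k l] Sm_entry[OF rho l k]
    by (simp add: algebra_simps)
qed

lemma Sm_expand:
  assumes rho: "\<rho> \<in> carrier_mat (2*d) (2*d)"
  shows "Sm d \<rho> (a*x+b*u) (a*y+b*v) (a*x+b*u) (a*y+b*v) =
    (cnj a * a) \<cdot>\<^sub>m Sm d \<rho> x y x y + (cnj a * b) \<cdot>\<^sub>m Sm d \<rho> x y u v
    + (a * cnj b) \<cdot>\<^sub>m Sm d \<rho> u v x y + (cnj b * b) \<cdot>\<^sub>m Sm d \<rho> u v u v"
proof (rule eq_matI)
  fix k l assume "k < dim_row ((cnj a * a) \<cdot>\<^sub>m Sm d \<rho> x y x y + (cnj a * b) \<cdot>\<^sub>m Sm d \<rho> x y u v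
    + (a * cnj b) \<cdot>\<^sub>m Sm d \<rho> u v x y + (cnj b * b) \<cdot>\<^sub>m Sm d \<rho> u v u v)"
    "l < dim_col ((cnj a * a) \<cdot>\<^sub>m Sm d \<rho> x y x y + (cnj a * b) \<cdot>\<^sub>m Sm d \<rho> x y u v
    + (a * cnj b) \<cdot>\<^sub>m Sm d \<rho> u v x y + (cnj b * b) \<cdot>\<^sub>m Sm d \<rho> u v u v)"
  then have k: "k < d" and l: "l < d" by auto
  show "Sm d \<rho> (a*x+b*u) (a*y+b*v) (a*x+b*u) (a*y+b*v) $$ (k,l) = ((cnj a * a) \<cdot>\<^sub>m Sm d \<rho> x y x y + (cnj a * b) \<cdot>\<^sub>m Sm d \<rho> x y u v
    + (a * cnj b) \<cdot>\<^sub>m Sm d \<rho> u v x y + (cnj b * b) \<cdot>\<^sub>m Sm d \<rho> u v u v) $$ (k,l)"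
    using k l by (simp add: Sm_entry[OF rho k l] algebra_simps)
qed auto

lemma decomp_entry:
  assumes rho: "\<rho> \<in> carrier_mat (2*d) (2*d)" and u: "cnj x * x + cnj y * y = 1"
    and i: "i < 2*d" and j: "j < 2*d"
  shows "\<rho> $$ (i,j) =
      co d x y i * Sm d \<rho> x y x y $$ (i mod d, j mod d) * cnj (co d x y j)
    + co d x y i * Sm d \<rho> x y (-cnj y) (cnj x) $$ (i mod d, j mod d) * cnj (co d (-cnj y) (cnj x) j)
    + co d (-cnj y) (cnj x) i * Sm d \<rho> (-cnj y) (cnj x) x y $$ (i mod d, j mod d) * cnj (co d x y j)
    + co d (-cnj y) (cnj x) i * Sm d \<rho> (-cnj y) (cnj x) (-cnj y) (cnj x) $$ (i mod d, j mod d) * cnj (co d (-cnj y) (cnj x) j)"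
proof -
  have d0: "0 < d" using i by auto
  have k: "i mod d < d" and l: "j mod d < d" using d0 by auto
  note E = Sm_entry[OF rho k l]
  define a where "a = \<rho> $$ (i mod d, j mod d)"
  define b where "b = \<rho> $$ (i mod d, j mod d + d)"
  define c where "c = \<rho> $$ (i mod d + d, j mod d)"
  define e where "e = \<rho> $$ (i mod d + d, j mod d + d)"
  have ri: "i mod d = (if i < d then i else i - d)" using i by (auto simp: mod_if)
  have rj: "j mod d = (if j < d then j else j - d)" using j by (auto simp: mod_if)
  have rij: "\<rho> $$ (i,j) = (if i < d then (if j < d then a else b) else (if j < d then c else e))"
    unfolding a_def b_def c_def e_def using ri rj i j by auto
  have u2: "x * cnj x + y * cnj y = 1" using u by (simp add: mult.commute)
  define N where "N = cnj x * x + cnj y * y"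
  have N1: "N = 1" using u N_def by simp
  note U = rij E a_def[symmetric] b_def[symmetric] c_def[symmetric] e_def[symmetric] co_def
  show ?thesis
  proof (cases "i < d"; cases "j < d")
    assume "i < d" "j < d"
    have "x * (cnj x * x * a + cnj x * y * b + cnj y * x * c + cnj y * y * e) * cnj x +
    x * (cnj x * - cnj y * a + cnj x * cnj x * b + cnj y * - cnj y * c + cnj y * cnj x * e) * cnj (- cnj y) +
    - cnj y * (cnj (- cnj y) * x * a + cnj (- cnj y) * y * b + cnj (cnj x) * x * c + cnj (cnj x) * y * e) * cnj x +
    - cnj y * (cnj (- cnj y) * - cnj y * a + cnj (- cnj y) * cnj x * b + cnj (cnj x) * - cnj y * c + cnj (cnj x) * cnj x * e) * cnj (- cnj y)
    = a * N * N" unfolding N_def by (simp add: algebra_simps)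
    then show ?thesis using \<open>i < d\<close> \<open>j < d\<close> N1 unfolding U by simp
  next
    assume "i < d" "\<not> j < d"
    have "x * (cnj x * x * a + cnj x * y * b + cnj y * x * c + cnj y * y * e) * cnj y +
    x * (cnj x * - cnj y * a + cnj x * cnj x * b + cnj y * - cnj y * c + cnj y * cnj x * e) * cnj (cnj x) +
    - cnj y * (cnj (- cnj y) * x * a + cnj (- cnj y) * y * b + cnj (cnj x) * x * c + cnj (cnj x) * y * e) * cnj y +
    - cnj y * (cnj (- cnj y) * - cnj y * a + cnj (- cnj y) * cnj x * b + cnj (cnj x) * - cnj y * c + cnj (cnj x) * cnj x * e) * cnj (cnj x)
    = b * N * N" unfolding N_def by (simp add: algebra_simps)
    then show ?thesis using \<open>i < d\<close> \<open>\<not> j < d\<close> N1 unfolding U by simp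
  next
    assume "\<not> i < d" "j < d"
    have "y * (cnj x * x * a + cnj x * y * b + cnj y * x * c + cnj y * y * e) * cnj x +
    y * (cnj x * - cnj y * a + cnj x * cnj x * b + cnj y * - cnj y * c + cnj y * cnj x * e) * cnj (- cnj y) +
    cnj x * (cnj (- cnj y) * x * a + cnj (- cnj y) * y * b + cnj (cnj x) * x * c + cnj (cnj x) * y * e) * cnj x +
    cnj x * (cnj (- cnj y) * - cnj y * a + cnj (- cnj y) * cnj x * b + cnj (cnj x) * - cnj y * c + cnj (cnj x) * cnj x * e) * cnj (- cnj y)
    = c * N * N" unfolding N_def by (simp add: algebra_simps)
    then show ?thesis using \<open>\<not> i < d\<close> \<open>j < d\<close> N1 unfolding U by simp
  next
    assume "\<not> i < d" "\<not> j < d"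
    have "y * (cnj x * x * a + cnj x * y * b + cnj y * x * c + cnj y * y * e) * cnj y +
    y * (cnj x * - cnj y * a + cnj x * cnj x * b + cnj y * - cnj y * c + cnj y * cnj x * e) * cnj (cnj x) +
    cnj x * (cnj (- cnj y) * x * a + cnj (- cnj y) * y * b + cnj (cnj x) * x * c + cnj (cnj x) * y * e) * cnj y +
    cnj x * (cnj (- cnj y) * - cnj y * a + cnj (- cnj y) * cnj x * b + cnj (cnj x) * - cnj y * c + cnj (cnj x) * cnj x * e) * cnj (cnj x)
    = e * N * N" unfolding N_def by (simp add: algebra_simps)
    then show ?thesis using \<open>\<not> i < d\<close> \<open>\<not> j < d\<close> N1 unfolding U by simp
  qed
qed

lemma vec_decomp:
  assumes u: "cnj x * x + cnj y * y = 1"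
  shows "f1 = (cnj x * f1 + cnj y * f2) * x + (- y * f1 + x * f2) * (- cnj y)"
    "f2 = (cnj x * f1 + cnj y * f2) * y + (- y * f1 + x * f2) * (cnj x)"
proof -
  have "(cnj x * f1 + cnj y * f2) * x + (- y * f1 + x * f2) * (- cnj y) = f1 * (cnj x * x + cnj y * y)"
    by (simp add: algebra_simps)
  then show "f1 = (cnj x * f1 + cnj y * f2) * x + (- y * f1 + x * f2) * (- cnj y)" using u by simp
  have "(cnj x * f1 + cnj y * f2) * y + (- y * f1 + x * f2) * (cnj x) = f2 * (cnj x * x + cnj y * y)"
    by (simp add: algebra_simps)
  then show "f2 = (cnj x * f1 + cnj y * f2) * y + (- y * f1 + x * f2) * (cnj x)" using u by simp
qed

lemma prj_carrier[simp]: "prj x y \<in> carrier_mat 2 2" unfolding prj_def by simp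
lemma prj_dim[simp]: "dim_row (prj x y) = 2" "dim_col (prj x y) = 2" unfolding prj_def by simp_all

lemma prj_index: "prj x y $$ (0,0) = x * cnj x" "prj x y $$ (0,1) = x * cnj y"
  "prj x y $$ (1,0) = y * cnj x" "prj x y $$ (1,1) = y * cnj y"
  unfolding prj_def by simp_all

lemma prj_index_Suc: "prj x y $$ (0,Suc 0) = x * cnj y"
  "prj x y $$ (Suc 0,0) = y * cnj x" "prj x y $$ (Suc 0,Suc 0) = y * cnj y"
  unfolding prj_def by simp_all

lemmas prj_idx = prj_index prj_index_Suc

lemma mat2_eqI:
  assumes "A \<in> carrier_mat 2 2" "B \<in> carrier_mat 2 2"
    "A $$ (0,0) = B $$ (0,0)" "A $$ (0,1) = B $$ (0,1)" "A $$ (1,0) = B $$ (1,0)" "A $$ (1,1) = B $$ (1,1)"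
  shows "A = B"
proof (rule eq_matI)
  fix i j assume "i < dim_row B" "j < dim_col B"
  then have "i < 2" "j < 2" using assms by auto
  then have "i = 0 \<or> i = 1" "j = 0 \<or> j = 1" by auto
  then show "A $$ (i,j) = B $$ (i,j)" using assms by auto
qed (use assms in auto)

lemma mat2_mult_entry:
  assumes "A \<in> carrier_mat 2 2" "B \<in> carrier_mat 2 2" "i < 2" "j < 2"
  shows "(A * B) $$ (i,j) = A $$ (i,0) * B $$ (0,j) + A $$ (i,1) * B $$ (1,j)"
  using assms by (simp add: scalar_prod_def atLeast0LessThan lessThan_Suc numeral_2_eq_2 add.commute)

lemma prj_neg: "prj (-x) (-y) = prj x y"
  by (rule mat2_eqI) (simp_all add: prj_idx)

lemma prj_perp: assumes u: "cnj x * x + cnj y * y = 1"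
  shows "prj (- cnj y) (cnj x) = 1\<^sub>m 2 - prj x y"
proof -
  have u2: "y * cnj y = 1 - x * cnj x" using u by (simp add: algebra_simps)
  have c: "1\<^sub>m 2 - prj x y \<in> carrier_mat 2 2" by (rule minus_carrier_mat) simp_all
  show ?thesis by (rule mat2_eqI) (use c in \<open>simp_all add: prj_idx u2 algebra_simps\<close>)
qed

lemma prj_ne_perp: assumes u: "cnj x * x + cnj y * y = 1"
  shows "prj x y \<noteq> prj (- cnj y) (cnj x)"
proof
  assume eq: "prj x y = prj (- cnj y) (cnj x)"
  then have "prj x y $$ (0,1) = prj (- cnj y) (cnj x) $$ (0,1)" by simp
  then have "x * cnj y = - (cnj y * x)" by (simp add: prj_idx)
  then have "x * cnj y = 0" by (simp add: mult.commute)
  then have "x = 0 \<or> y = 0" by simp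
  moreover have "prj x y $$ (0,0) = prj (- cnj y) (cnj x) $$ (0,0)" using eq by simp
  then have "x * cnj x = cnj y * y" by (simp add: prj_idx)
  ultimately show False using u by (auto simp: mult.commute)
qed

lemma prj_eq_beta0:
  assumes u: "cnj x * x + cnj y * y = 1" and uf: "cnj f1 * f1 + cnj f2 * f2 = 1"
    and b: "- y * f1 + x * f2 = 0"
  shows "prj f1 f2 = prj x y"
proof -
  define \<alpha> where "\<alpha> = cnj x * f1 + cnj y * f2"
  have f1: "f1 = \<alpha> * x" and f2: "f2 = \<alpha> * y" using vec_decomp[OF u, where ?f1.0 = f1 and ?f2.0 = f2] b unfolding \<alpha>_def by simp_all
  have "cnj f1 * f1 + cnj f2 * f2 = (cnj \<alpha> * \<alpha>) * (cnj x * x + cnj y * y)"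
    unfolding f1 f2 by (simp add: algebra_simps)
  then have a1: "cnj \<alpha> * \<alpha> = 1" using u uf by simp
  have e: "\<And>p q. (\<alpha> * p) * cnj (\<alpha> * q) = (cnj \<alpha> * \<alpha>) * (p * cnj q)" by (simp add: algebra_simps)
  show ?thesis by (rule mat2_eqI) (simp_all add: prj_idx f1 f2 e a1 del: complex_cnj_mult)
qed

lemma prj_eq_alpha0:
  assumes u: "cnj x * x + cnj y * y = 1" and uf: "cnj f1 * f1 + cnj f2 * f2 = 1"
    and a: "cnj x * f1 + cnj y * f2 = 0"
  shows "prj f1 f2 = prj (- cnj y) (cnj x)"
proof -
  define \<beta> where "\<beta> = - y * f1 + x * f2"
  define g1 where "g1 = - cnj y"
  define g2 where "g2 = cnj x"
  have f1: "f1 = \<beta> * g1" and f2: "f2 = \<beta> * g2"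
    using vec_decomp[OF u, where ?f1.0 = f1 and ?f2.0 = f2] a unfolding \<beta>_def g1_def g2_def by simp_all
  have ug: "cnj g1 * g1 + cnj g2 * g2 = 1" using u unfolding g1_def g2_def by (simp add: mult.commute add.commute)
  have "cnj f1 * f1 + cnj f2 * f2 = (cnj \<beta> * \<beta>) * (cnj g1 * g1 + cnj g2 * g2)"
    unfolding f1 f2 by (simp add: algebra_simps)
  then have a1: "cnj \<beta> * \<beta> = 1" using ug uf by simp
  have e: "\<And>p q. (\<beta> * p) * cnj (\<beta> * q) = (cnj \<beta> * \<beta>) * (p * cnj q)" by (simp add: algebra_simps)
  have "prj f1 f2 = prj g1 g2"
    by (rule mat2_eqI) (simp_all add: prj_idx f1 f2 e a1 del: complex_cnj_mult)
  then show ?thesis unfolding g1_def g2_def .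
qed

lemma mrank_one2: "mrank (1\<^sub>m 2 :: complex mat) = 2"
proof -
  have "det (1\<^sub>m 2 :: complex mat) \<noteq> 0" by simp
  then show ?thesis unfolding mrank_def using vec_space.det_rank_iff[of "1\<^sub>m 2 :: complex mat" 2] by simp
qed

lemma rank_one_proj2_prj:
  assumes P: "rank_one_proj2 P"
  shows "\<exists>x y. cnj x * x + cnj y * y = 1 \<and> P = prj x y"
proof -
  have c: "P \<in> carrier_mat 2 2" and idem: "P * P = P" and h: "mat_adjoint P = P" and r: "mrank P = 1"
    using P unfolding rank_one_proj2_def by auto
  define p where "p = P $$ (0,0)"
  define q where "q = P $$ (0,1)"
  define s where "s = P $$ (1,1)"
  have P10: "P $$ (1,0) = cnj q" unfolding q_def using herm_entry[OF h c, of 1 0] by simp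
  have pr: "p = cnj p" unfolding p_def using herm_entry[OF h c, of 0 0] by simp
  have sr: "s = cnj s" unfolding s_def using herm_entry[OF h c, of 1 1] by simp
  have E00: "p * p + q * cnj q = p"
    using mat2_mult_entry[OF c c, of 0 0] idem P10 unfolding p_def q_def by simp
  have E11: "cnj q * q + s * s = s"
    using mat2_mult_entry[OF c c, of 1 1] idem P10 unfolding s_def q_def by simp
  have E01: "p * q + q * s = q"
    using mat2_mult_entry[OF c c, of 0 1] idem unfolding p_def q_def s_def by simp
  have n0: "P \<noteq> 0\<^sub>m 2 2" using r mrank_le_zero[OF c] by auto
  have n1: "P \<noteq> 1\<^sub>m 2" using r mrank_one2 by auto
  have ps: "p + s = 1"
  proof (cases "q = 0")
    case False
    then have "q * (p + s - 1) = 0" using E01 by (simp add: algebra_simps)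
    then show ?thesis using False by simp
  next
    case True
    then have "p * p = p" "s * s = s" using E00 E11 by auto
    then have p01: "p = 0 \<or> p = 1" and s01: "s = 0 \<or> s = 1"
      by (metis mult_cancel_left2 mult_cancel_right2)+
    have "\<not> (p = 0 \<and> s = 0)"
    proof
      assume "p = 0 \<and> s = 0"
      then have "P = 0\<^sub>m 2 2" using True P10 c
        by (intro mat2_eqI) (auto simp: p_def q_def s_def)
      then show False using n0 by simp
    qed
    moreover have "\<not> (p = 1 \<and> s = 1)"
    proof
      assume "p = 1 \<and> s = 1"
      then have "P = 1\<^sub>m 2" using True P10 c
        by (intro mat2_eqI) (auto simp: p_def q_def s_def)
      then show False using n1 by simp
    qed
    ultimately show ?thesis using p01 s01 by auto
  qed
  show ?thesis
  proof (cases "p = 0")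
    case True
    then have s1: "s = 1" using ps by simp
    have "q * cnj q = 0" using E00 True by simp
    then have q0: "q = 0" by simp
    have "P = prj 0 1"
      by (rule mat2_eqI) (use c True s1 q0 P10 in \<open>auto simp: prj_idx p_def q_def s_def\<close>)
    then show ?thesis by (intro exI[of _ 0] exI[of _ 1]) simp
  next
    case False
    obtain pr where pr': "p = of_real pr" using pr by (metis Reals_cnj_iff Reals_cases)
    have qq: "q * cnj q = of_real (pr - pr * pr)" using E00 pr' by (simp add: algebra_simps)
    have "pr - pr * pr \<ge> 0"
    proof -
      have "q * cnj q = of_real ((cmod q)\<^sup>2)" by (simp only: complex_norm_square)
      then show ?thesis using qq by (metis of_real_eq_iff zero_le_power2)
    qed
    moreover have "pr \<noteq> 0" using False pr' by simp
    ultimately have prp: "pr > 0"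
    proof -
      assume h1: "pr - pr * pr \<ge> 0" and h2: "pr \<noteq> 0"
      show "pr > 0"
      proof (rule ccontr)
        assume "\<not> pr > 0"
        then have "pr < 0" using h2 by auto
        then have "pr * pr > 0" by (simp add: mult_neg_neg)
        then show False using h1 \<open>pr < 0\<close> by linarith
      qed
    qed
    define x where "x = complex_of_real (sqrt pr)"
    define y where "y = cnj q / x"
    have xx: "x * cnj x = p" unfolding x_def pr' using prp
      by (metis Reals_cnj_iff Reals_of_real less_eq_real_def of_real_mult real_sqrt_mult_self abs_of_nonneg)
    have xr: "cnj x = x" unfolding x_def by simp
    have x0: "x \<noteq> 0" unfolding x_def using prp by simp
    have yy: "y * cnj y = s"
    proof -
      have "y * cnj y = (q * cnj q) / (x * cnj x)" unfolding y_def by (simp add: field_simps)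
      also have "\<dots> = (p - p * p) / p" using xx qq pr' by simp
      also have "\<dots> = 1 - p" using False by (simp add: field_simps)
      finally have yy1: "y * cnj y = 1 - p" .
      have "s = 1 - p" using ps by (simp add: algebra_simps)
      then show ?thesis using yy1 by simp
    qed
    have xy: "x * cnj y = q" unfolding y_def using x0 xr by (simp add: field_simps)
    have yx: "y * cnj x = cnj q" unfolding y_def using x0 xr by (simp add: field_simps)
    have "P = prj x y"
      by (rule mat2_eqI) (use c xx xy yx yy P10 in \<open>auto simp: prj_idx p_def q_def s_def\<close>)
    moreover have "cnj x * x + cnj y * y = 1" using xx yy ps by (simp add: mult.commute)
    ultimately show ?thesis by blast
  qed
qed

lemma mat_eq_of_minus_zero:
  assumes "X \<in> carrier_mat n m" "W \<in> carrier_mat n m" "X - W = 0\<^sub>m n m"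
  shows "X = (W :: complex mat)"
proof (rule eq_matI)
  fix i j assume "i < dim_row W" "j < dim_col W"
  then have ij: "i < n" "j < m" using assms by auto
  have "(X - W) $$ (i,j) = 0\<^sub>m n m $$ (i,j)" using assms(3) by simp
  then have "X $$ (i,j) - W $$ (i,j) = 0" using assms(1,2) ij by simp
  then show "X $$ (i,j) = W $$ (i,j)" by simp
qed (use assms in auto)

lemma block_kernel:
  assumes psd: "psd N \<rho>" and E: "E \<in> carrier_mat N d" and F: "F \<in> carrier_mat N d'"
    and A: "A \<in> carrier_mat d 1" and A0: "A \<noteq> 0\<^sub>m d 1"
    and S: "mat_adjoint E * \<rho> * E = A * mat_adjoint A"
  shows "\<exists>Y. Y \<in> carrier_mat d' 1 \<and> mat_adjoint F * \<rho> * E = Y * mat_adjoint A"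
proof -
  have rho: "\<rho> \<in> carrier_mat N N" using psd_carrier[OF psd] .
  note dims[simp] = carrier_matD[OF rho] carrier_matD[OF E] carrier_matD[OF F] carrier_matD[OF A]
  define n where "n = (mat_adjoint A * A) $$ (0,0)"
  have cA: "col A 0 \<in> carrier_vec d" using col_dim[of A 0] A by (metis carrier_matD(1))
  have "n = conjugate (col A 0) \<bullet> col A 0" unfolding n_def using A by (simp add: adj_row)
  also have "\<dots> = col A 0 \<bullet>c col A 0" using comm_scalar_prod[OF cA, of "conjugate (col A 0)"] cA by simp
  finally have n_eq: "n = col A 0 \<bullet>c col A 0" .
  have "col A 0 \<noteq> 0\<^sub>v d"
  proof
    assume c0: "col A 0 = 0\<^sub>v d"
    have "A = 0\<^sub>m d 1"
    proof (rule eq_matI)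
      fix i j assume "i < dim_row (0\<^sub>m d 1 :: complex mat)" "j < dim_col (0\<^sub>m d 1 :: complex mat)"
      then have ij: "i < d" "j = 0" by auto
      have "A $$ (i,0) = col A 0 $ i" using A ij by simp
      also have "\<dots> = 0" using c0 ij by simp
      finally show "A $$ (i,j) = 0\<^sub>m d 1 $$ (i,j)" using ij by simp
    qed auto
    then show False using A0 by simp
  qed
  then have n0: "n \<noteq> 0" unfolding n_eq using cA by simp
  have AA: "mat_adjoint A * A = n \<cdot>\<^sub>m 1\<^sub>m 1"
    by (rule eq_matI) (auto simp: n_def)
  define Pi where "Pi = 1\<^sub>m d - (1/n) \<cdot>\<^sub>m (A * mat_adjoint A)"
  have Pi_dim[simp]: "dim_row Pi = d" "dim_col Pi = d" unfolding Pi_def by auto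
  have "mat_adjoint A * Pi = mat_adjoint A - (1/n) \<cdot>\<^sub>m (mat_adjoint A * A * mat_adjoint A)"
    unfolding Pi_def by (simp add: mat_dim_simps)
  also have "mat_adjoint A * A * mat_adjoint A = n \<cdot>\<^sub>m mat_adjoint A"
    unfolding AA by (simp add: mat_dim_simps)
  also have "mat_adjoint A - (1/n) \<cdot>\<^sub>m (n \<cdot>\<^sub>m mat_adjoint A) = 0\<^sub>m 1 d"
    by (rule eq_matI) (use n0 in auto)
  finally have APi: "mat_adjoint A * Pi = 0\<^sub>m 1 d" .
  have "mat_adjoint (E * Pi) * (\<rho> * (E * Pi)) = mat_adjoint Pi * ((mat_adjoint E * \<rho> * E) * Pi)"
    by (simp add: mat_dim_simps adj_mult_dim)
  also have "\<dots> = mat_adjoint Pi * (A * (mat_adjoint A * Pi))"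
    unfolding S by (simp add: mat_dim_simps)
  also have "\<dots> = 0\<^sub>m d d" unfolding APi by (simp add: mat_dim_simps)
  finally have z: "mat_adjoint (E * Pi) * (\<rho> * (E * Pi)) = 0\<^sub>m d d" .
  have EPi: "E * Pi \<in> carrier_mat N d" by (rule carrier_matI) auto
  have rEPi: "\<rho> * (E * Pi) = 0\<^sub>m N d"
    by (rule psd_mat_zero[OF psd EPi]) (use z in simp)
  define SFE where "SFE = mat_adjoint F * \<rho> * E"
  have SFE_dim[simp]: "dim_row SFE = d'" "dim_col SFE = d" unfolding SFE_def by auto
  have "SFE - (1/n) \<cdot>\<^sub>m (SFE * A * mat_adjoint A) = SFE * Pi"
    unfolding Pi_def by (simp add: mat_dim_simps)
  also have "SFE * Pi = mat_adjoint F * (\<rho> * (E * Pi))" unfolding SFE_def by (simp add: mat_dim_simps)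
  also have "\<dots> = 0\<^sub>m d' d" unfolding rEPi by (simp add: mat_dim_simps)
  finally have mz: "SFE - (1/n) \<cdot>\<^sub>m (SFE * A * mat_adjoint A) = 0\<^sub>m d' d" .
  have c1: "SFE \<in> carrier_mat d' d" by (rule carrier_matI) simp_all
  have c2: "(1/n) \<cdot>\<^sub>m (SFE * A * mat_adjoint A) \<in> carrier_mat d' d" by (rule carrier_matI) simp_all
  have "SFE = (1/n) \<cdot>\<^sub>m (SFE * A * mat_adjoint A)" by (rule mat_eq_of_minus_zero[OF c1 c2 mz])
  also have "\<dots> = ((1/n) \<cdot>\<^sub>m (SFE * A)) * mat_adjoint A" by (simp add: mat_dim_simps)
  finally have "SFE = ((1/n) \<cdot>\<^sub>m (SFE * A)) * mat_adjoint A" .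
  moreover have "(1/n) \<cdot>\<^sub>m (SFE * A) \<in> carrier_mat d' 1" by (rule carrier_matI) simp_all
  ultimately show ?thesis unfolding SFE_def by blast
qed

lemma Sm_assoc: "Sm d \<rho> x y x' y' = mat_adjoint (Emat d x y) * (\<rho> * Emat d x' y')"
  if "\<rho> \<in> carrier_mat (2*d) (2*d)"
  unfolding Sm_def using that by (simp add: mat_dim_simps)

lemma rank_le1_contra:
  assumes r2: "mrank \<rho> = 2" and u: "u \<in> carrier_mat n 1" and v: "v \<in> carrier_mat 1 n" and e: "\<rho> = u * v"
  shows False
  using mrank_mult_le[OF u v] r2 e by simp

lemma coreA:
  assumes psd: "psd (2*d) \<rho>" and r2: "mrank \<rho> = 2" and u: "cnj x * x + cnj y * y = 1"
    and z: "Sm d \<rho> x y x y = 0\<^sub>m d d"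
  shows "mrank (Sm d \<rho> (-cnj y) (cnj x) (-cnj y) (cnj x)) = 2"
    "Sm d \<rho> f1 f2 f1 f2 = (cnj (- y * f1 + x * f2) * (- y * f1 + x * f2)) \<cdot>\<^sub>m Sm d \<rho> (-cnj y) (cnj x) (-cnj y) (cnj x)"
proof -
  have rho: "\<rho> \<in> carrier_mat (2*d) (2*d)" using psd_carrier[OF psd] .
  have h: "mat_adjoint \<rho> = \<rho>" using psd_herm[OF psd] .
  note dims[simp] = carrier_matD[OF rho]
  define E where "E = Emat d x y"
  define F where "F = Emat d (-cnj y) (cnj x)"
  have rE: "\<rho> * E = 0\<^sub>m (2*d) d"
  proof (rule psd_mat_zero[OF psd])
    show "E \<in> carrier_mat (2*d) d" unfolding E_def by simp
    fix j assume "j < d"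
    have "mat_adjoint E * (\<rho> * E) = Sm d \<rho> x y x y" unfolding E_def using Sm_assoc[OF rho] by simp
    then show "(mat_adjoint E * (\<rho> * E)) $$ (j,j) = 0" using z \<open>j < d\<close> by simp
  qed
  have SFE: "Sm d \<rho> (-cnj y) (cnj x) x y = 0\<^sub>m d d"
    unfolding Sm_assoc[OF rho] E_def[symmetric] rE by (simp add: mat_dim_simps)
  have SEF: "Sm d \<rho> x y (-cnj y) (cnj x) = 0\<^sub>m d d"
  proof (rule eq_matI)
    fix k l assume "k < dim_row (0\<^sub>m d d :: complex mat)" "l < dim_col (0\<^sub>m d d :: complex mat)"
    then have kl: "k < d" "l < d" by auto
    show "Sm d \<rho> x y (-cnj y) (cnj x) $$ (k,l) = 0\<^sub>m d d $$ (k,l)"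
      unfolding Sm_swap[OF rho h kl] SFE using kl by simp
  qed auto
  define SFF where "SFF = Sm d \<rho> (-cnj y) (cnj x) (-cnj y) (cnj x)"
  define \<alpha> where "\<alpha> = cnj x * f1 + cnj y * f2"
  define \<beta> where "\<beta> = - y * f1 + x * f2"
  have f1: "f1 = \<alpha> * x + \<beta> * (- cnj y)" and f2: "f2 = \<alpha> * y + \<beta> * cnj x"
    using vec_decomp[OF u, where ?f1.0 = f1 and ?f2.0 = f2] unfolding \<alpha>_def \<beta>_def by simp_all
  have "Sm d \<rho> f1 f2 f1 f2 = (cnj \<alpha> * \<alpha>) \<cdot>\<^sub>m Sm d \<rho> x y x y + (cnj \<alpha> * \<beta>) \<cdot>\<^sub>m Sm d \<rho> x y (-cnj y) (cnj x)
    + (\<alpha> * cnj \<beta>) \<cdot>\<^sub>m Sm d \<rho> (-cnj y) (cnj x) x y + (cnj \<beta> * \<beta>) \<cdot>\<^sub>m SFF"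
  proof -
    have "Sm d \<rho> f1 f2 f1 f2 = Sm d \<rho> (\<alpha> * x + \<beta> * (- cnj y)) (\<alpha> * y + \<beta> * cnj x) (\<alpha> * x + \<beta> * (- cnj y)) (\<alpha> * y + \<beta> * cnj x)"
      by (simp only: f1[symmetric] f2[symmetric])
    then show ?thesis unfolding SFF_def Sm_expand[OF rho] .
  qed
  also have "\<dots> = (cnj \<beta> * \<beta>) \<cdot>\<^sub>m SFF"
    unfolding z SEF SFE by (rule eq_matI) (auto simp: SFF_def)
  finally show "Sm d \<rho> f1 f2 f1 f2 = (cnj (- y * f1 + x * f2) * (- y * f1 + x * f2)) \<cdot>\<^sub>m Sm d \<rho> (-cnj y) (cnj x) (-cnj y) (cnj x)"
    unfolding \<beta>_def SFF_def .
  obtain U Y where UY: "U \<in> carrier_mat (2*d) 2" "Y \<in> carrier_mat 2 (2*d)" "\<rho> = U * Y"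
    using mrank_factor[OF rho, of 2] r2 by auto
  have "SFF = (mat_adjoint F * U) * (Y * F)"
    unfolding SFF_def Sm_def using carrier_matD[OF UY(1)] carrier_matD[OF UY(2)] UY(3)
    by (simp add: mat_dim_simps F_def)
  moreover have "mat_adjoint F * U \<in> carrier_mat d 2" "Y * F \<in> carrier_mat 2 d"
    using carrier_matD[OF UY(1)] carrier_matD[OF UY(2)] unfolding F_def by (auto intro!: carrier_matI)
  ultimately have le2: "mrank SFF \<le> 2" using mrank_mult_le by metis
  have "\<not> mrank SFF \<le> 1"
  proof
    assume "mrank SFF \<le> 1"
    then obtain U1 Y1 where U1: "U1 \<in> carrier_mat d 1" "Y1 \<in> carrier_mat 1 d" "SFF = U1 * Y1"
      using mrank_factor[of SFF d d 1] unfolding SFF_def by auto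
    define uu where "uu = mat (2*d) 1 (\<lambda>(i,_). co d (-cnj y) (cnj x) i * U1 $$ (i mod d, 0))"
    define vv where "vv = mat 1 (2*d) (\<lambda>(_,j). Y1 $$ (0, j mod d) * cnj (co d (-cnj y) (cnj x) j))"
    have "\<rho> = uu * vv"
    proof (rule eq_matI)
      fix i j assume "i < dim_row (uu * vv)" "j < dim_col (uu * vv)"
      then have ij: "i < 2*d" "j < 2*d" unfolding uu_def vv_def by auto
      then have d0: "0 < d" by auto
      have m: "i mod d < d" "j mod d < d" using d0 by auto
      have "\<rho> $$ (i,j) = co d (-cnj y) (cnj x) i * SFF $$ (i mod d, j mod d) * cnj (co d (-cnj y) (cnj x) j)"
        unfolding decomp_entry[OF rho u ij] z SEF SFE SFF_def using m by simp
      also have "\<dots> = (uu * vv) $$ (i,j)"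
        unfolding U1(3) using U1 m ij by (simp add: uu_def vv_def scalar_prod_def)
      finally show "\<rho> $$ (i,j) = (uu * vv) $$ (i,j)" .
    qed (auto simp: uu_def vv_def)
    moreover have "uu \<in> carrier_mat (2*d) 1" "vv \<in> carrier_mat 1 (2*d)" unfolding uu_def vv_def by auto
    ultimately show False using rank_le1_contra[OF r2] by blast
  qed
  then show "mrank (Sm d \<rho> (-cnj y) (cnj x) (-cnj y) (cnj x)) = 2" using le2 unfolding SFF_def by simp
qed

lemma col1_nonzero:
  assumes "M \<in> carrier_mat d 1" "M \<noteq> 0\<^sub>m d 1"
  shows "\<exists>k<d. M $$ (k,0) \<noteq> 0"
proof (rule ccontr)
  assume "\<not> (\<exists>k<d. M $$ (k,0) \<noteq> 0)"
  then have "M = 0\<^sub>m d 1" using assms(1) by (intro eq_matI) auto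
  then show False using assms(2) by simp
qed

lemma outer_entry:
  assumes "A \<in> carrier_mat d 1" "B \<in> carrier_mat d' 1" "k < d" "l < d'"
  shows "(A * mat_adjoint B) $$ (k,l) = A $$ (k,0) * cnj (B $$ (l,0))"
  using assms by (simp add: scalar_prod_def)

lemma Sm_psd:
  assumes "psd (2*d) \<rho>" shows "psd d (Sm d \<rho> x y x y)"
  unfolding Sm_def by (rule psd_congr[OF assms]) simp

lemma coreB:
  assumes psd: "psd (2*d) \<rho>" and r2: "mrank \<rho> = 2" and u: "cnj x * x + cnj y * y = 1"
    and r0: "mrank (Sm d \<rho> x y x y) = 1" and r1: "mrank (Sm d \<rho> (-cnj y) (cnj x) (-cnj y) (cnj x)) = 1"
  shows "(\<forall>f1 f2. cnj x * f1 + cnj y * f2 \<noteq> 0 \<longrightarrow> - y * f1 + x * f2 \<noteq> 0 \<longrightarrow> mrank (Sm d \<rho> f1 f2 f1 f2) = 2)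
    \<or> (\<forall>f1 f2. \<exists>\<mu>. Sm d \<rho> f1 f2 f1 f2 = \<mu> \<cdot>\<^sub>m Sm d \<rho> x y x y)"
proof -
  have rho: "\<rho> \<in> carrier_mat (2*d) (2*d)" using psd_carrier[OF psd] .
  have h: "mat_adjoint \<rho> = \<rho>" using psd_herm[OF psd] .
  define x' where "x' = - cnj y"
  define y' where "y' = cnj x"
  define SEE where "SEE = Sm d \<rho> x y x y"
  define SEF where "SEF = Sm d \<rho> x y x' y'"
  define SFE where "SFE = Sm d \<rho> x' y' x y"
  define SFF where "SFF = Sm d \<rho> x' y' x' y'"
  obtain A where A: "A \<in> carrier_mat d 1" "SEE = A * mat_adjoint A"
    using rank1_psd[OF Sm_psd[OF psd] r0] unfolding SEE_def by auto
  obtain B where B: "B \<in> carrier_mat d 1" "SFF = B * mat_adjoint B"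
    using rank1_psd[OF Sm_psd[OF psd] r1] unfolding SFF_def x'_def y'_def by auto
  have A0: "A \<noteq> 0\<^sub>m d 1"
  proof
    assume "A = 0\<^sub>m d 1"
    then have "SEE = 0\<^sub>m d d" using A by (simp add: mat_dim_simps)
    then show False using r0 mrank_le_zero[of SEE d d] unfolding SEE_def by simp
  qed
  have B0: "B \<noteq> 0\<^sub>m d 1"
  proof
    assume "B = 0\<^sub>m d 1"
    then have "SFF = 0\<^sub>m d d" using B by (simp add: mat_dim_simps)
    then show False using r1 mrank_le_zero[of SFF d d] unfolding SFF_def x'_def y'_def by simp
  qed
  have "\<exists>Y. Y \<in> carrier_mat d 1 \<and> mat_adjoint (Emat d x' y') * \<rho> * Emat d x y = Y * mat_adjoint A"
    by (rule block_kernel[OF psd _ _ A(1) A0]) (use A(2) in \<open>simp_all add: SEE_def Sm_def\<close>)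
  then obtain Y where Y: "Y \<in> carrier_mat d 1" "SFE = Y * mat_adjoint A"
    unfolding SFE_def Sm_def by auto
  have "\<exists>Z. Z \<in> carrier_mat d 1 \<and> mat_adjoint (Emat d x y) * \<rho> * Emat d x' y' = Z * mat_adjoint B"
    by (rule block_kernel[OF psd _ _ B(1) B0]) (use B(2) in \<open>simp_all add: SFF_def Sm_def\<close>)
  then obtain Z where Z: "Z \<in> carrier_mat d 1" "SEF = Z * mat_adjoint B"
    unfolding SEF_def Sm_def by auto
  obtain l0 where l0: "l0 < d" "B $$ (l0,0) \<noteq> 0" using col1_nonzero[OF B(1) B0] by auto
  define c where "c = cnj (Y $$ (l0,0)) / cnj (B $$ (l0,0))"
  have eEE: "SEE $$ (k,l) = A $$ (k,0) * cnj (A $$ (l,0))" if "k < d" "l < d" for k l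
    unfolding A(2) using outer_entry[OF A(1) A(1) that] .
  have eFF: "SFF $$ (k,l) = B $$ (k,0) * cnj (B $$ (l,0))" if "k < d" "l < d" for k l
    unfolding B(2) using outer_entry[OF B(1) B(1) that] .
  have sw: "SEF $$ (k,l) = cnj (SFE $$ (l,k))" if "k < d" "l < d" for k l
    unfolding SEF_def SFE_def using Sm_swap[OF rho h that] .
  have eEF: "SEF $$ (k,l) = c * A $$ (k,0) * cnj (B $$ (l,0))" if kl: "k < d" "l < d" for k l
  proof -
    have z1: "Z $$ (k,0) * cnj (B $$ (l0,0)) = cnj (Y $$ (l0,0)) * A $$ (k,0)"
      using sw[OF kl(1) l0(1)] unfolding Z(2) Y(2) outer_entry[OF Z(1) B(1) kl(1) l0(1)]
        outer_entry[OF Y(1) A(1) l0(1) kl(1)] by simp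
    have "Z $$ (k,0) = c * A $$ (k,0)" unfolding c_def using z1 l0(2) by (simp add: field_simps)
    then show ?thesis unfolding Z(2) outer_entry[OF Z(1) B(1) kl] by simp
  qed
  have eFE: "SFE $$ (k,l) = cnj c * B $$ (k,0) * cnj (A $$ (l,0))" if kl: "k < d" "l < d" for k l
  proof -
    have "SEF $$ (l,k) = cnj (SFE $$ (k,l))" using sw[OF kl(2) kl(1)] .
    then have "SFE $$ (k,l) = cnj (SEF $$ (l,k))" by simp
    then show ?thesis unfolding eEF[OF kl(2) kl(1)] by simp
  qed
  have c1: "cnj c * c \<noteq> 1"
  proof
    assume cc: "cnj c * c = 1"
    define r where "r = mat (2*d) 1 (\<lambda>(i,_). co d x y i * A $$ (i mod d, 0) + cnj c * co d x' y' i * B $$ (i mod d, 0))"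
    have rc: "r \<in> carrier_mat (2*d) 1" unfolding r_def by simp
    have "\<rho> = r * mat_adjoint r"
    proof (rule eq_matI)
      fix i j assume "i < dim_row (r * mat_adjoint r)" "j < dim_col (r * mat_adjoint r)"
      then have ij: "i < 2*d" "j < 2*d" unfolding r_def by auto
      then have d0: "0 < d" by auto
      have m: "i mod d < d" "j mod d < d" using d0 by auto
      define a1 where "a1 = co d x y i"
      define a2 where "a2 = co d x' y' i"
      define b1 where "b1 = co d x y j"
      define b2 where "b2 = co d x' y' j"
      define p where "p = A $$ (i mod d, 0)"
      define q where "q = B $$ (i mod d, 0)"
      define p' where "p' = A $$ (j mod d, 0)"
      define q' where "q' = B $$ (j mod d, 0)"
      have "\<rho> $$ (i,j) = a1 * (p * cnj p') * cnj b1 + a1 * (c * p * cnj q') * cnj b2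
        + a2 * (cnj c * q * cnj p') * cnj b1 + a2 * (q * cnj q') * cnj b2"
        using decomp_entry[OF rho u ij] eEE[OF m] eEF[OF m] eFE[OF m] eFF[OF m]
        unfolding SEE_def SEF_def SFE_def SFF_def x'_def y'_def a1_def a2_def b1_def b2_def p_def q_def p'_def q'_def
        by simp
      also have "\<dots> = (a1 * p + cnj c * a2 * q) * cnj (b1 * p' + cnj c * b2 * q') + (1 - cnj c * c) * (a2 * q * cnj (b2 * q'))"
        by (simp add: algebra_simps)
      also have "\<dots> = (a1 * p + cnj c * a2 * q) * cnj (b1 * p' + cnj c * b2 * q')" using cc by simp
      also have "\<dots> = (r * mat_adjoint r) $$ (i,j)"
        using ij unfolding r_def a1_def a2_def b1_def b2_def p_def q_def p'_def q'_def
        by (simp add: scalar_prod_def)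
      finally show "\<rho> $$ (i,j) = (r * mat_adjoint r) $$ (i,j)" .
    qed (use rho in \<open>auto simp: r_def\<close>)
    then show False using rank_le1_contra[OF r2 rc] rc by auto
  qed
  have expand: "Sm d \<rho> f1 f2 f1 f2 $$ (k,l) =
      (cnj \<alpha> * \<alpha>) * (A $$ (k,0) * cnj (A $$ (l,0))) + (cnj \<alpha> * \<beta>) * (c * A $$ (k,0) * cnj (B $$ (l,0)))
    + (\<alpha> * cnj \<beta>) * (cnj c * B $$ (k,0) * cnj (A $$ (l,0))) + (cnj \<beta> * \<beta>) * (B $$ (k,0) * cnj (B $$ (l,0)))"
    if kl: "k < d" "l < d" and al: "\<alpha> = cnj x * f1 + cnj y * f2" and be: "\<beta> = - y * f1 + x * f2" for f1 f2 \<alpha> \<beta> k l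
  proof -
    have f1: "f1 = \<alpha> * x + \<beta> * x'" and f2: "f2 = \<alpha> * y + \<beta> * y'"
      using vec_decomp[OF u, where ?f1.0 = f1 and ?f2.0 = f2] unfolding al be x'_def y'_def by simp_all
    have "Sm d \<rho> f1 f2 f1 f2 = Sm d \<rho> (\<alpha> * x + \<beta> * x') (\<alpha> * y + \<beta> * y') (\<alpha> * x + \<beta> * x') (\<alpha> * y + \<beta> * y')"
      by (simp only: f1[symmetric] f2[symmetric])
    also have "\<dots> = (cnj \<alpha> * \<alpha>) \<cdot>\<^sub>m SEE + (cnj \<alpha> * \<beta>) \<cdot>\<^sub>m SEF + (\<alpha> * cnj \<beta>) \<cdot>\<^sub>m SFE + (cnj \<beta> * \<beta>) \<cdot>\<^sub>m SFF"
      unfolding SEE_def SEF_def SFE_def SFF_def by (rule Sm_expand[OF rho])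
    finally have "Sm d \<rho> f1 f2 f1 f2 $$ (k,l) = ((cnj \<alpha> * \<alpha>) \<cdot>\<^sub>m SEE + (cnj \<alpha> * \<beta>) \<cdot>\<^sub>m SEF + (\<alpha> * cnj \<beta>) \<cdot>\<^sub>m SFE + (cnj \<beta> * \<beta>) \<cdot>\<^sub>m SFF) $$ (k,l)"
      by simp
    also have "\<dots> = (cnj \<alpha> * \<alpha>) * SEE $$ (k,l) + (cnj \<alpha> * \<beta>) * SEF $$ (k,l) + (\<alpha> * cnj \<beta>) * SFE $$ (k,l) + (cnj \<beta> * \<beta>) * SFF $$ (k,l)"
      using kl unfolding SEE_def SEF_def SFE_def SFF_def by simp
    finally show ?thesis unfolding eEE[OF kl] eEF[OF kl] eFE[OF kl] eFF[OF kl] .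
  qed
  show ?thesis
  proof (cases "\<exists>k l. k < d \<and> l < d \<and> A $$ (k,0) * B $$ (l,0) \<noteq> A $$ (l,0) * B $$ (k,0)")
    case True
    then obtain k l where kl: "k < d" "l < d" and D: "A $$ (k,0) * B $$ (l,0) \<noteq> A $$ (l,0) * B $$ (k,0)" by blast
    have "\<forall>f1 f2. cnj x * f1 + cnj y * f2 \<noteq> 0 \<longrightarrow> - y * f1 + x * f2 \<noteq> 0 \<longrightarrow> mrank (Sm d \<rho> f1 f2 f1 f2) = 2"
    proof (intro allI impI)
      fix f1 f2
      define \<alpha> where "\<alpha> = cnj x * f1 + cnj y * f2"
      define \<beta> where "\<beta> = - y * f1 + x * f2"
      assume "cnj x * f1 + cnj y * f2 \<noteq> 0" "- y * f1 + x * f2 \<noteq> 0"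
      then have a0: "\<alpha> \<noteq> 0" and b0: "\<beta> \<noteq> 0" unfolding \<alpha>_def \<beta>_def by auto
      define R where "R = Sm d \<rho> f1 f2 f1 f2"
      have eR: "R $$ (s,t) = (cnj \<alpha> * \<alpha>) * (A $$ (s,0) * cnj (A $$ (t,0))) + (cnj \<alpha> * \<beta>) * (c * A $$ (s,0) * cnj (B $$ (t,0)))
        + (\<alpha> * cnj \<beta>) * (cnj c * B $$ (s,0) * cnj (A $$ (t,0))) + (cnj \<beta> * \<beta>) * (B $$ (s,0) * cnj (B $$ (t,0)))"
        if "s < d" "t < d" for s t
        unfolding R_def by (rule expand[OF that \<alpha>_def \<beta>_def])
      have Rc: "R \<in> carrier_mat d d" unfolding R_def by simp
      define V1 where "V1 = mat 1 d (\<lambda>(_,t). (cnj \<alpha> * \<alpha>) * cnj (A $$ (t,0)) + (cnj \<alpha> * \<beta>) * c * cnj (B $$ (t,0)))"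
      define V2 where "V2 = mat 1 d (\<lambda>(_,t). (\<alpha> * cnj \<beta>) * cnj c * cnj (A $$ (t,0)) + (cnj \<beta> * \<beta>) * cnj (B $$ (t,0)))"
      have RAB: "R = A * V1 + B * V2"
      proof (rule eq_matI)
        fix s t assume "s < dim_row (A * V1 + B * V2)" "t < dim_col (A * V1 + B * V2)"
        then have st: "s < d" "t < d" using A(1) B(1) unfolding V1_def V2_def by auto
        show "R $$ (s,t) = (A * V1 + B * V2) $$ (s,t)"
          unfolding eR[OF st] using st A(1) B(1) unfolding V1_def V2_def
          by (simp add: scalar_prod_def algebra_simps)
      qed (use Rc A(1) B(1) in \<open>auto simp: V1_def V2_def\<close>)
      have c1': "A * V1 \<in> carrier_mat d d" "B * V2 \<in> carrier_mat d d"
        using A(1) B(1) unfolding V1_def V2_def by (auto intro!: carrier_matI)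
      have "mrank R \<le> mrank (A * V1) + mrank (B * V2)" unfolding RAB by (rule mrank_add_le[OF c1'])
      also have "mrank (A * V1) \<le> 1" by (rule mrank_mult_le[OF A(1), of V1 d]) (simp add: V1_def)
      also have "mrank (B * V2) \<le> 1" by (rule mrank_mult_le[OF B(1), of V2 d]) (simp add: V2_def)
      finally have le2: "mrank R \<le> 2" by simp
      have "\<not> mrank R \<le> 1"
      proof
        assume "mrank R \<le> 1"
        from mrank_le1_minor[OF Rc this kl(1) kl(2) kl(1) kl(2)]
        have m: "R $$ (k,k) * R $$ (l,l) = R $$ (k,l) * R $$ (l,k)" .
        define Dt where "Dt = A $$ (k,0) * B $$ (l,0) - A $$ (l,0) * B $$ (k,0)"
        have "R $$ (k,k) * R $$ (l,l) - R $$ (k,l) * R $$ (l,k) =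
          (cnj \<alpha> * \<alpha>) * (cnj \<beta> * \<beta>) * (1 - cnj c * c) * (Dt * cnj Dt)"
          unfolding eR[OF kl(1) kl(1)] eR[OF kl(2) kl(2)] eR[OF kl(1) kl(2)] eR[OF kl(2) kl(1)] Dt_def
          by (simp add: algebra_simps)
        moreover have "(cnj \<alpha> * \<alpha>) * (cnj \<beta> * \<beta>) * (1 - cnj c * c) * (Dt * cnj Dt) \<noteq> 0"
        proof -
          have "Dt \<noteq> 0" unfolding Dt_def using D by simp
          moreover have "1 - cnj c * c \<noteq> 0" using c1 by simp
          ultimately show ?thesis using a0 b0 by simp
        qed
        ultimately show False using m by simp
      qed
      then show "mrank (Sm d \<rho> f1 f2 f1 f2) = 2" using le2 unfolding R_def by simp
    qed
    then show ?thesis by blast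
  next
    case False
    then have dep: "\<And>k l. k < d \<Longrightarrow> l < d \<Longrightarrow> A $$ (k,0) * B $$ (l,0) = A $$ (l,0) * B $$ (k,0)" by blast
    obtain k0 where k0: "k0 < d" "A $$ (k0,0) \<noteq> 0" using col1_nonzero[OF A(1) A0] by auto
    define lam where "lam = B $$ (k0,0) / A $$ (k0,0)"
    have Bl: "B $$ (l,0) = lam * A $$ (l,0)" if "l < d" for l
      using dep[OF k0(1) that] k0(2) unfolding lam_def by (simp add: field_simps)
    have "\<forall>f1 f2. \<exists>\<mu>. Sm d \<rho> f1 f2 f1 f2 = \<mu> \<cdot>\<^sub>m Sm d \<rho> x y x y"
    proof (intro allI)
      fix f1 f2
      define \<alpha> where "\<alpha> = cnj x * f1 + cnj y * f2"
      define \<beta> where "\<beta> = - y * f1 + x * f2"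
      define \<mu> where "\<mu> = cnj \<alpha> * \<alpha> + cnj \<alpha> * \<beta> * c * cnj lam + \<alpha> * cnj \<beta> * cnj c * lam + cnj \<beta> * \<beta> * lam * cnj lam"
      have "Sm d \<rho> f1 f2 f1 f2 = \<mu> \<cdot>\<^sub>m Sm d \<rho> x y x y"
      proof (rule eq_matI)
        fix s t assume "s < dim_row (\<mu> \<cdot>\<^sub>m Sm d \<rho> x y x y)" "t < dim_col (\<mu> \<cdot>\<^sub>m Sm d \<rho> x y x y)"
        then have st: "s < d" "t < d" by auto
        show "Sm d \<rho> f1 f2 f1 f2 $$ (s,t) = (\<mu> \<cdot>\<^sub>m Sm d \<rho> x y x y) $$ (s,t)"
          unfolding expand[OF st \<alpha>_def \<beta>_def] using st eEE[OF st] unfolding SEE_def \<mu>_def Bl[OF st(1)] Bl[OF st(2)]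
          by (simp add: algebra_simps)
      qed auto
      then show "\<exists>\<mu>. Sm d \<rho> f1 f2 f1 f2 = \<mu> \<cdot>\<^sub>m Sm d \<rho> x y x y" by blast
    qed
    then show ?thesis by blast
  qed
qed

lemma one_minus_of_sum:
  assumes "A \<in> carrier_mat 2 2" "B \<in> carrier_mat 2 2" "A + B = 1\<^sub>m 2"
  shows "B = 1\<^sub>m 2 - (A :: complex mat)"
proof (rule eq_matI)
  fix i j assume "i < dim_row (1\<^sub>m 2 - A)" "j < dim_col (1\<^sub>m 2 - A)"
  then have ij: "i < 2" "j < 2" using assms(1) by auto
  have "(A + B) $$ (i,j) = 1\<^sub>m 2 $$ (i,j)" using assms(3) by simp
  then have "A $$ (i,j) + B $$ (i,j) = 1\<^sub>m 2 $$ (i,j)" using assms(1,2) ij by simp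
  then show "B $$ (i,j) = (1\<^sub>m 2 - A) $$ (i,j)" using assms(1) ij by (simp add: algebra_simps)
qed (use assms in auto)

lemma one_minus_inj:
  assumes "A \<in> carrier_mat 2 2" "B \<in> carrier_mat 2 2" "1\<^sub>m 2 - A = 1\<^sub>m 2 - (B :: complex mat)"
  shows "A = B"
proof (rule eq_matI)
  fix i j assume "i < dim_row B" "j < dim_col B"
  then have ij: "i < 2" "j < 2" using assms by auto
  have "(1\<^sub>m 2 - A) $$ (i,j) = (1\<^sub>m 2 - B) $$ (i,j)" using assms(3) by simp
  then show "A $$ (i,j) = B $$ (i,j)" using assms(1,2) ij by simp
qed (use assms in auto)

lemma meas_prj:
  assumes "nontriv_pm P0 P1"
  shows "\<exists>x y. cnj x * x + cnj y * y = 1 \<and> P0 = prj x y \<and> P1 = prj (- cnj y) (cnj x)"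
proof -
  have r: "rank_one_proj2 P0" "rank_one_proj2 P1" and s: "P0 + P1 = 1\<^sub>m 2"
    using assms unfolding nontriv_pm_def by auto
  have c: "P0 \<in> carrier_mat 2 2" "P1 \<in> carrier_mat 2 2" using r unfolding rank_one_proj2_def by auto
  obtain x y where xy: "cnj x * x + cnj y * y = 1" "P0 = prj x y" using rank_one_proj2_prj[OF r(1)] by auto
  have "P1 = 1\<^sub>m 2 - P0" by (rule one_minus_of_sum[OF c s])
  then have "P1 = prj (- cnj y) (cnj x)" using prj_perp[OF xy(1)] xy(2) by simp
  then show ?thesis using xy by blast
qed

lemma proportional_smult:
  assumes "c \<noteq> 0" "c' \<noteq> 0" "X = c \<cdot>\<^sub>m N" "Y = c' \<cdot>\<^sub>m N"
  shows "proportional X Y"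
  unfolding proportional_def
proof (intro exI conjI)
  show "c / c' \<noteq> 0" using assms by simp
  show "X = (c / c') \<cdot>\<^sub>m Y" unfolding assms(3,4) by (rule eq_matI) (use assms in auto)
qed

theorem lemma5:
  fixes d :: nat and \<rho> :: "complex mat" and P :: "nat \<Rightarrow> nat \<Rightarrow> complex mat"
  assumes state: "is_state (2*d) \<rho>"
    and rank2: "mrank \<rho> = 2"
    and meas0: "nontriv_pm (P 0 0) (P 1 0)"
    and meas1: "nontriv_pm (P 0 1) (P 1 1)"
    and diff: "P 0 0 \<noteq> P 0 1 \<and> P 0 0 \<noteq> P 1 1"
  defines "R \<equiv> (\<lambda>a x. assem d \<rho> (P a x))"
  shows
    "(\<forall>a<2. \<forall>x<2. R a x = 0\<^sub>m d d \<longrightarrow>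
        (\<forall>a'<2. \<forall>x'<2. (a',x') \<noteq> (a,x) \<longrightarrow> mrank (R a' x') = 2) \<and>
        (\<forall>a'<2. \<forall>x'<2. \<forall>a''<2. \<forall>x''<2. (a',x') \<noteq> (a,x) \<longrightarrow> (a'',x'') \<noteq> (a,x) \<longrightarrow>
            proportional (R a' x') (R a'' x'')))
   \<and> (\<forall>x1<2. \<forall>x2<2. x1 \<noteq> x2 \<longrightarrow> mrank (R 0 x1) = 1 \<longrightarrow> mrank (R 1 x1) = 1 \<longrightarrow>
        (mrank (R 0 x2) = 2 \<and> mrank (R 1 x2) = 2) \<or>
        ((\<forall>a<2. \<forall>x<2. mrank (R a x) = 1) \<and>
         (\<forall>a<2. \<forall>x<2. \<forall>a'<2. \<forall>x'<2. proportional (R a x) (R a' x'))))"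
proof -
  have psd: "psd (2*d) \<rho>" using state unfolding is_state_def by auto
  have rho: "\<rho> \<in> carrier_mat (2*d) (2*d)" using psd_carrier[OF psd] .
  obtain x0 y0 where m0: "cnj x0 * x0 + cnj y0 * y0 = 1" "P 0 0 = prj x0 y0" "P 1 0 = prj (- cnj y0) (cnj x0)"
    using meas_prj[OF meas0] by auto
  obtain x1 y1 where m1: "cnj x1 * x1 + cnj y1 * y1 = 1" "P 0 1 = prj x1 y1" "P 1 1 = prj (- cnj y1) (cnj x1)"
    using meas_prj[OF meas1] by auto
  define X where "X x = (if x = 0 then x0 else x1)" for x :: nat
  define Y where "Y x = (if x = 0 then y0 else y1)" for x :: nat
  define wx where "wx a x = (if a = 0 then X x else - cnj (Y x))" for a x :: nat
  define wy where "wy a x = (if a = 0 then Y x else cnj (X x))" for a x :: nat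
  have lt2: "\<And>a. a < (2::nat) \<longleftrightarrow> a = 0 \<or> a = 1" by auto
  have uX: "cnj (X x) * X x + cnj (Y x) * Y x = 1" if "x < 2" for x
    using that m0(1) m1(1) unfolding X_def Y_def lt2 by auto
  have uw: "cnj (wx a x) * wx a x + cnj (wy a x) * wy a x = 1" if "a < 2" "x < 2" for a x
    using uX[OF that(2)] that(1) unfolding wx_def wy_def lt2 by (auto simp: mult.commute add.commute)
  have Pw: "P a x = prj (wx a x) (wy a x)" if "a < 2" "x < 2" for a x
    using that m0 m1 unfolding wx_def wy_def X_def Y_def lt2 by auto
  have Pperp: "P (1 - a) x = prj (- cnj (wy a x)) (cnj (wx a x))" if "a < 2" "x < 2" for a x
  proof -
    have "a = 0 \<or> a = 1" using that by auto
    then show ?thesis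
    proof
      assume "a = 0" then show ?thesis using Pw[of 1 x] that unfolding wx_def wy_def by simp
    next
      assume "a = 1" then show ?thesis using Pw[of 0 x] that prj_neg unfolding wx_def wy_def by simp
    qed
  qed
  have RS: "R a x = Sm d \<rho> (wx a x) (wy a x) (wx a x) (wy a x)" if "a < 2" "x < 2" for a x
    unfolding R_def Pw[OF that] assem_prj[OF rho] Sm_def ..
  have RSperp: "R (1 - a) x = Sm d \<rho> (- cnj (wy a x)) (cnj (wx a x)) (- cnj (wy a x)) (cnj (wx a x))"
    if "a < 2" "x < 2" for a x
    unfolding R_def Pperp[OF that] assem_prj[OF rho] Sm_def ..
  have Pc: "P a x \<in> carrier_mat 2 2" if "a < 2" "x < 2" for a x using Pw[OF that] by simp
  have D: "P a' x' \<noteq> P a x" if "a < 2" "x < 2" "a' < 2" "x' < 2" "(a',x') \<noteq> (a,x)" for a x a' x'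
  proof
    assume eq: "P a' x' = P a x"
    have P10: "P 1 0 = 1\<^sub>m 2 - P 0 0" using prj_perp[OF m0(1)] m0 by simp
    have P11: "P 1 1 = 1\<^sub>m 2 - P 0 1" using prj_perp[OF m1(1)] m1 by simp
    have n0: "P 0 x \<noteq> P 1 x" if "x < 2" for x
      using prj_ne_perp[OF uw[of 0 x]] Pw[of 0 x] Pw[of 1 x] that unfolding wx_def wy_def by simp
    have a1: "P 1 0 \<noteq> P 1 1"
    proof
      assume "P 1 0 = P 1 1"
      then have "P 0 0 = P 0 1" using one_minus_inj[OF Pc Pc, of 0 0 0 1] P10 P11 by simp
      then show False using diff by simp
    qed
    have mm: "1\<^sub>m 2 - (1\<^sub>m 2 - A) = A" if "A \<in> carrier_mat 2 2" for A :: "complex mat"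
      by (rule eq_matI) (use that in auto)
    have a2: "P 1 0 \<noteq> P 0 1"
    proof
      assume h: "P 1 0 = P 0 1"
      have "1\<^sub>m 2 - P 1 1 = P 0 1" unfolding P11 using mm[OF Pc[of 0 1]] by simp
      then have "1\<^sub>m 2 - P 0 0 = 1\<^sub>m 2 - P 1 1" using h P10 by simp
      then have "P 0 0 = P 1 1" using one_minus_inj[OF Pc Pc, of 0 0 1 1] by simp
      then show False using diff by simp
    qed
    have "a = 0 \<or> a = 1" "x = 0 \<or> x = 1" "a' = 0 \<or> a' = 1" "x' = 0 \<or> x' = 1" using that by auto
    then show False using eq that(5) diff a1 a2 n0[of 0] n0[of 1] by auto
  qed
  have partI: "\<forall>a<2. \<forall>x<2. R a x = 0\<^sub>m d d \<longrightarrow>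
        (\<forall>a'<2. \<forall>x'<2. (a',x') \<noteq> (a,x) \<longrightarrow> mrank (R a' x') = 2) \<and>
        (\<forall>a'<2. \<forall>x'<2. \<forall>a''<2. \<forall>x''<2. (a',x') \<noteq> (a,x) \<longrightarrow> (a'',x'') \<noteq> (a,x) \<longrightarrow>
            proportional (R a' x') (R a'' x''))"
  proof (intro allI impI)
    fix a x assume a: "a < 2" and x: "x < 2" and z: "R a x = 0\<^sub>m d d"
    define e1 where "e1 = wx a x"
    define e2 where "e2 = wy a x"
    have ue: "cnj e1 * e1 + cnj e2 * e2 = 1" unfolding e1_def e2_def by (rule uw[OF a x])
    have zS: "Sm d \<rho> e1 e2 e1 e2 = 0\<^sub>m d d" using z RS[OF a x] unfolding e1_def e2_def by simp
    define N where "N = Sm d \<rho> (- cnj e2) (cnj e1) (- cnj e2) (cnj e1)"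
    have rkN: "mrank N = 2" unfolding N_def by (rule coreA(1)[OF psd rank2 ue zS])
    have key: "\<exists>c. c \<noteq> 0 \<and> R a' x' = c \<cdot>\<^sub>m N" if a': "a' < 2" "x' < 2" "(a',x') \<noteq> (a,x)" for a' x'
    proof -
      define f1 where "f1 = wx a' x'"
      define f2 where "f2 = wy a' x'"
      define \<beta> where "\<beta> = - e2 * f1 + e1 * f2"
      have uf: "cnj f1 * f1 + cnj f2 * f2 = 1" unfolding f1_def f2_def by (rule uw[OF a'(1,2)])
      have b0: "\<beta> \<noteq> 0"
      proof
        assume "\<beta> = 0"
        then have "prj f1 f2 = prj e1 e2" using prj_eq_beta0[OF ue uf] unfolding \<beta>_def by simp
        then have "P a' x' = P a x" using Pw[OF a'(1,2)] Pw[OF a x] unfolding f1_def f2_def e1_def e2_def by simp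
        then show False using D[OF a x a'] by simp
      qed
      have "R a' x' = (cnj \<beta> * \<beta>) \<cdot>\<^sub>m N"
        unfolding RS[OF a'(1,2)] f1_def[symmetric] f2_def[symmetric] N_def \<beta>_def
        by (rule coreA(2)[OF psd rank2 ue zS])
      moreover have "cnj \<beta> * \<beta> \<noteq> 0" using b0 by simp
      ultimately show ?thesis by blast
    qed
    show "(\<forall>a'<2. \<forall>x'<2. (a',x') \<noteq> (a,x) \<longrightarrow> mrank (R a' x') = 2) \<and>
        (\<forall>a'<2. \<forall>x'<2. \<forall>a''<2. \<forall>x''<2. (a',x') \<noteq> (a,x) \<longrightarrow> (a'',x'') \<noteq> (a,x) \<longrightarrow>
            proportional (R a' x') (R a'' x''))"
    proof (intro conjI allI impI)
      fix a' x' assume "a' < 2" "x' < 2" "(a',x') \<noteq> (a,x)"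
      then obtain c where "c \<noteq> 0" "R a' x' = c \<cdot>\<^sub>m N" using key by blast
      then show "mrank (R a' x') = 2" using mrank_smult[of N d d c] rkN unfolding N_def by simp
    next
      fix a' x' a'' x'' assume "a' < 2" "x' < 2" "a'' < 2" "x'' < 2" "(a',x') \<noteq> (a,x)" "(a'',x'') \<noteq> (a,x)"
      then obtain c c' where "c \<noteq> 0" "c' \<noteq> 0" "R a' x' = c \<cdot>\<^sub>m N" "R a'' x'' = c' \<cdot>\<^sub>m N"
        using key by meson
      then show "proportional (R a' x') (R a'' x'')" by (rule proportional_smult)
    qed
  qed
  have partII: "\<forall>x1<2. \<forall>x2<2. x1 \<noteq> x2 \<longrightarrow> mrank (R 0 x1) = 1 \<longrightarrow> mrank (R 1 x1) = 1 \<longrightarrow>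
        (mrank (R 0 x2) = 2 \<and> mrank (R 1 x2) = 2) \<or>
        ((\<forall>a<2. \<forall>x<2. mrank (R a x) = 1) \<and>
         (\<forall>a<2. \<forall>x<2. \<forall>a'<2. \<forall>x'<2. proportional (R a x) (R a' x')))"
  proof (intro allI impI)
    fix xa xb :: nat assume xa: "xa < 2" and xb: "xb < 2" and ne: "xa \<noteq> xb"
      and r0: "mrank (R 0 xa) = 1" and r1: "mrank (R 1 xa) = 1"
    define e1 where "e1 = X xa"
    define e2 where "e2 = Y xa"
    have w0: "wx 0 xa = e1" "wy 0 xa = e2" and w1: "wx 1 xa = - cnj e2" "wy 1 xa = cnj e1"
      unfolding wx_def wy_def e1_def e2_def by simp_all
    have ue: "cnj e1 * e1 + cnj e2 * e2 = 1" using uw[OF _ xa, of 0] w0 by simp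
    have r0': "mrank (Sm d \<rho> e1 e2 e1 e2) = 1" using r0 RS[OF _ xa, of 0] w0 by simp
    have r1': "mrank (Sm d \<rho> (- cnj e2) (cnj e1) (- cnj e2) (cnj e1)) = 1" using r1 RS[OF _ xa, of 1] w1 by simp
    have ov: "cnj e1 * wx a xb + cnj e2 * wy a xb \<noteq> 0 \<and> - e2 * wx a xb + e1 * wy a xb \<noteq> 0" if a: "a < 2" for a
    proof
      have uf: "cnj (wx a xb) * wx a xb + cnj (wy a xb) * wy a xb = 1" by (rule uw[OF a xb])
      show "cnj e1 * wx a xb + cnj e2 * wy a xb \<noteq> 0"
      proof
        assume "cnj e1 * wx a xb + cnj e2 * wy a xb = 0"
        then have "prj (wx a xb) (wy a xb) = prj (- cnj e2) (cnj e1)" by (rule prj_eq_alpha0[OF ue uf])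
        then have "P a xb = P 1 xa" using Pw[OF a xb] Pw[OF _ xa, of 1] w1 by simp
        then show False using D[OF _ xa a xb, of 1] ne by auto
      qed
      show "- e2 * wx a xb + e1 * wy a xb \<noteq> 0"
      proof
        assume "- e2 * wx a xb + e1 * wy a xb = 0"
        then have "prj (wx a xb) (wy a xb) = prj e1 e2" by (rule prj_eq_beta0[OF ue uf])
        then have "P a xb = P 0 xa" using Pw[OF a xb] Pw[OF _ xa, of 0] w0 by simp
        then show False using D[OF _ xa a xb, of 0] ne by auto
      qed
    qed
    from coreB[OF psd rank2 ue r0' r1']
    show "(mrank (R 0 xb) = 2 \<and> mrank (R 1 xb) = 2) \<or>
        ((\<forall>a<2. \<forall>x<2. mrank (R a x) = 1) \<and>
         (\<forall>a<2. \<forall>x<2. \<forall>a'<2. \<forall>x'<2. proportional (R a x) (R a' x')))"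
    proof
      assume L: "\<forall>f1 f2. cnj e1 * f1 + cnj e2 * f2 \<noteq> 0 \<longrightarrow> - e2 * f1 + e1 * f2 \<noteq> 0 \<longrightarrow> mrank (Sm d \<rho> f1 f2 f1 f2) = 2"
      have "mrank (R a xb) = 2" if a: "a < 2" for a
        using L ov[OF a] RS[OF a xb] by simp
      then show ?thesis by simp
    next
      assume Rt: "\<forall>f1 f2. \<exists>\<mu>. Sm d \<rho> f1 f2 f1 f2 = \<mu> \<cdot>\<^sub>m Sm d \<rho> e1 e2 e1 e2"
      define R0 where "R0 = Sm d \<rho> e1 e2 e1 e2"
      have rR0: "mrank R0 = 1" unfolding R0_def by (rule r0')
      have nz: "R a x \<noteq> 0\<^sub>m d d" if "a < 2" "x < 2" for a x
      proof
        assume z: "R a x = 0\<^sub>m d d"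
        show False
        proof (cases "(0, xa) = (a, x)")
          case True
          then have "R 0 xa = 0\<^sub>m d d" using z by simp
          then show False using r0 mrank_le_zero[of "R 0 xa" d d] by (simp add: R_def)
        next
          case False
          then have "mrank (R 0 xa) = 2" using partI that z xa by auto
          then show False using r0 by simp
        qed
      qed
      have key: "\<exists>\<mu>. \<mu> \<noteq> 0 \<and> R a x = \<mu> \<cdot>\<^sub>m R0" if ax: "a < 2" "x < 2" for a x
      proof -
        obtain \<mu> where mu: "R a x = \<mu> \<cdot>\<^sub>m R0" using Rt RS[OF ax] unfolding R0_def by metis
        have "\<mu> \<noteq> 0"
        proof
          assume "\<mu> = 0"
          then have "R a x = 0\<^sub>m d d" unfolding mu R0_def by (rule_tac eq_matI) auto
          then show False using nz[OF ax] by simp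
        qed
        then show ?thesis using mu by blast
      qed
      have "\<forall>a<2. \<forall>x<2. mrank (R a x) = 1"
      proof (intro allI impI)
        fix a x assume "a < (2::nat)" "x < (2::nat)"
        then obtain \<mu> where "\<mu> \<noteq> 0" "R a x = \<mu> \<cdot>\<^sub>m R0" using key by blast
        then show "mrank (R a x) = 1" using mrank_smult[of R0 d d \<mu>] rR0 unfolding R0_def by simp
      qed
      moreover have "\<forall>a<2. \<forall>x<2. \<forall>a'<2. \<forall>x'<2. proportional (R a x) (R a' x')"
      proof (intro allI impI)
        fix a x a' x' assume "a < (2::nat)" "x < (2::nat)" "a' < (2::nat)" "x' < (2::nat)"
        then obtain \<mu> \<mu>' where "\<mu> \<noteq> 0" "\<mu>' \<noteq> 0" "R a x = \<mu> \<cdot>\<^sub>m R0" "R a' x' = \<mu>' \<cdot>\<^sub>m R0"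
          using key by meson
        then show "proportional (R a x) (R a' x')" by (rule proportional_smult)
      qed
      ultimately show ?thesis by blast
    qed
  qed
  show ?thesis using partI partII by blast
qed

end
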